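(* With notation as in the context, for every $n\ge1$, every $2\le j\le a$ with $j\equiv a\pmod 2$ and every $1\le m\le d$, \[ (D_{2dn})^aA_j(n)\in\mathbb Z,\qquad (D_{2dn})^aB_m(n)\in\mathbb Z, \] and, as $n\to\infty$, \[ \frac{\log|A_j(n)|}{n},\ \frac{\log|B_m(n)|}{n}\ \le\ 2a\log2+4(b+d)\log(b+d)-4d\log d+o(1). \]
   Context: Fix positive integers $d,a,b$ with $a\ge 2b$. For each positive integer $n$ let $Q_n(t)=\prod_{dn<l\le (d+2b)n}(t-l)(t+l)$, $R_n(t)=\bigl(\prod_{-n\le l\le n}(t-dl)\bigr)^a$, and $P_n(t)=\frac{Q_n(t)}{R_n(t)}((2n)!)^{a-2b}d^{2na}$, with unique partial fraction decomposition $P_n(t)=\sum_{j=1}^{a}\sum_{l=-n}^n A_{l,j}(n)(t-dl)^{-j}$. Set $A_j(n)=\sum_{l=-n}^nA_{l,j}(n)$ and, for $1\le m\le d$, \[ B_m(n)=\sum_{j=1}^a\sum_{l=-n}^{n}A_{l,j}(n)\sum_{k=0}^{n-l-1}\frac{1}{(dk+m)^j}. \] $D_{2dn}=\operatorname{lcm}\{1,2,\dots,2dn\}$. *)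

theory Defs
  imports "HOL-Analysis.Analysis"
begin

definition Qn :: "nat \<Rightarrow> nat \<Rightarrow> nat \<Rightarrow> real \<Rightarrow> real" where
  "Qn d b n t = (\<Prod>l\<in>{d*n<..(d+2*b)*n}. (t - real l) * (t + real l))"

definition Rn :: "nat \<Rightarrow> nat \<Rightarrow> nat \<Rightarrow> real \<Rightarrow> real" where
  "Rn d a n t = (\<Prod>l\<in>{-int n..int n}. (t - real d * of_int l)) ^ a"

definition Pn :: "nat \<Rightarrow> nat \<Rightarrow> nat \<Rightarrow> nat \<Rightarrow> real \<Rightarrow> real" where
  "Pn d a b n t = Qn d b n t / Rn d a n t * (fact (2*n)) ^ (a - 2*b) * real d ^ (2*n*a)"

definition Acoef :: "nat \<Rightarrow> nat \<Rightarrow> nat \<Rightarrow> nat \<Rightarrow> int \<Rightarrow> nat \<Rightarrow> real" where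
  "Acoef d a b n = (THE A. (\<forall>l j. A l j \<noteq> 0 \<longrightarrow> l \<in> {-int n..int n} \<and> j \<in> {1..a}) \<and>
     (\<forall>t::real. (\<forall>l\<in>{-int n..int n}. t \<noteq> real d * of_int l) \<longrightarrow>
        Pn d a b n t = (\<Sum>j=1..a. \<Sum>l\<in>{-int n..int n}. A l j / (t - real d * of_int l) ^ j)))"

definition Aj :: "nat \<Rightarrow> nat \<Rightarrow> nat \<Rightarrow> nat \<Rightarrow> nat \<Rightarrow> real" where
  "Aj d a b j n = (\<Sum>l\<in>{-int n..int n}. Acoef d a b n l j)"

definition Bm :: "nat \<Rightarrow> nat \<Rightarrow> nat \<Rightarrow> nat \<Rightarrow> nat \<Rightarrow> real" where
  "Bm d a b m n = (\<Sum>j=1..a. \<Sum>l\<in>{-int n..int n}.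
      Acoef d a b n l j * (\<Sum>k\<in>{0..<nat (int n - l)}. 1 / (real d * real k + real m) ^ j))"

definition Dlcm :: "nat \<Rightarrow> nat" where
  "Dlcm N = Lcm {1..N}"

end

theory Submission
  imports Defs "HOL-Computational_Algebra.Polynomial" "HOL-Real_Asymp.Real_Asymp"
begin


lemma two_pole:
  fixes t x y :: real
  assumes "t \<noteq> x" "t \<noteq> y" "x \<noteq> y" "j \<ge> 1"
  shows "1 / ((t - x)^j * (t - y)) =
         1 / ((y - x)^j * (t - y)) - (\<Sum>i\<in>{1..j}. 1 / ((y - x)^(j - i + 1) * (t - x)^i))"
  using assms(4)
proof (induction j rule: dec_induct)
  case base
  have tx: "t - x \<noteq> 0" and yx: "y - x \<noteq> 0" and ty: "t - y \<noteq> 0" using assms by auto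
  have "1 / ((t - x) * (t - y)) = 1 / ((y - x) * (t - y)) - 1 / ((y - x) * (t - x))"
    using tx yx ty by (simp add: divide_simps)
  then show ?case by simp
next
  case (step j)
  have tx: "t - x \<noteq> 0" and yx: "y - x \<noteq> 0" and ty: "t - y \<noteq> 0" using assms by auto
  have "1 / ((t - x)^Suc j * (t - y)) = (1 / ((t - x)^j * (t - y))) / (t - x)"
    by (simp add: field_simps)
  also have "\<dots> = (1 / ((y - x)^j * (t - y)) - (\<Sum>i\<in>{1..j}. 1 / ((y - x)^(j - i + 1) * (t - x)^i))) / (t-x)"
    using step.IH by simp
  also have "\<dots> = 1 / ((y - x)^j * (t - y)) / (t-x)
       - (\<Sum>i\<in>{1..j}. 1 / ((y - x)^(j - i + 1) * (t - x)^i) / (t-x))"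
    by (simp add: diff_divide_distrib sum_divide_distrib)
  also have "(\<Sum>i\<in>{1..j}. 1 / ((y - x)^(j - i + 1) * (t - x)^i) / (t-x))
       = (\<Sum>i\<in>{1..j}. 1 / ((y - x)^(j - i + 1) * (t - x)^Suc i))"
    by (intro sum.cong refl) (simp add: field_simps)
  also have "1 / ((y - x)^j * (t - y)) / (t-x) = 1 / ((y - x)^Suc j * (t - y)) - 1/((y-x)^Suc j * (t-x))"
  proof -
    have b: "1 / ((t - x) * (t - y)) = 1 / ((y - x) * (t - y)) - 1 / ((y - x) * (t - x))"
      using tx yx ty by (simp add: divide_simps)
    have "1 / ((y - x)^j * (t - y)) / (t-x) = (1 / ((t - x) * (t - y))) / (y-x)^j"
      by simp
    also have "\<dots> = (1 / ((y - x) * (t - y)) - 1 / ((y - x) * (t - x))) / (y-x)^j"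
      by (simp only: b)
    also have "\<dots> = 1 / ((y - x)^Suc j * (t - y)) - 1/((y-x)^Suc j * (t-x))"
      by (simp add: diff_divide_distrib mult_ac)
    finally show ?thesis .
  qed
  also have "(\<Sum>i\<in>{1..j}. 1 / ((y - x)^(j - i + 1) * (t - x)^Suc i))
      = (\<Sum>i\<in>{2..Suc j}. 1 / ((y - x)^(Suc j - i + 1) * (t - x)^i))"
  proof -
    have "(\<Sum>i\<in>{2..Suc j}. 1 / ((y - x)^(Suc j - i + 1) * (t - x)^i))
        = (\<Sum>i\<in>{1..j}. 1 / ((y - x)^(Suc j - Suc i + 1) * (t - x)^Suc i))"
      by (simp only: numeral_2_eq_2 sum.shift_bounds_cl_Suc_ivl One_nat_def)
    thus ?thesis by simp
  qed
  moreover have "(\<Sum>i\<in>{1..Suc j}. 1 / ((y - x)^(Suc j - i + 1) * (t - x)^i))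
      = 1/((y-x)^Suc j * (t-x)) + (\<Sum>i\<in>{2..Suc j}. 1 / ((y - x)^(Suc j - i + 1) * (t - x)^i))"
  proof -
    have "{1..Suc j} = insert 1 {2..Suc j}" by auto
    then show ?thesis by (simp only:) (subst sum.insert, auto)
  qed
  ultimately show ?case by simp
qed

lemma sum_upto_if:
  fixes f :: "nat \<Rightarrow> real"
  assumes "j \<le> K"
  shows "(\<Sum>i\<in>{1..j}. f i) = (\<Sum>i\<in>{1..K}. if i \<le> j then f i else 0)"
  by (rule sum.mono_neutral_cong_left) (use assms in auto)

definition pf :: "int set \<Rightarrow> (int \<Rightarrow> real) \<Rightarrow> nat \<Rightarrow> (int \<Rightarrow> nat \<Rightarrow> real) \<Rightarrow> real \<Rightarrow> real" where
  "pf I x K c t = (\<Sum>j=1..K. \<Sum>l\<in>I. c l j / (t - x l)^j)"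

definition sf :: "int set \<Rightarrow> (int \<Rightarrow> real) \<Rightarrow> (int \<Rightarrow> real) \<Rightarrow> real \<Rightarrow> real" where
  "sf I x r t = (\<Sum>l\<in>I. r l / (t - x l))"

definition step :: "int set \<Rightarrow> (int \<Rightarrow> real) \<Rightarrow> nat \<Rightarrow> (int \<Rightarrow> real) \<Rightarrow> (int \<Rightarrow> nat \<Rightarrow> real) \<Rightarrow> int \<Rightarrow> nat \<Rightarrow> real" where
  "step I x K r c l' j' = (if l' \<in> I \<and> 1 \<le> j' \<and> j' \<le> K+1 then
      (if 2 \<le> j' then c l' (j'-1) * r l' else 0)
    + (if j' = 1 then (\<Sum>l\<in>I. \<Sum>j=1..K. (if l \<noteq> l' then c l j * r l' / (x l' - x l)^j else 0)) else 0)
    - (\<Sum>m\<in>I. \<Sum>j=1..K. (if m \<noteq> l' \<and> j' \<le> j then c l' j * r m / (x m - x l')^(j - j' + 1) else 0))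
    else 0)"

lemma step_pf:
  assumes finI: "finite I" and inj: "inj_on x I" and t: "t \<notin> x ` I"
  shows "pf I x (Suc K) (step I x K r c) t = pf I x K c t * sf I x r t"
proof -
  define F1 where "F1 = (\<lambda>j l m. if m = l then c l j * r l / (t - x l)^Suc j else (0::real))"
  define F2 where "F2 = (\<lambda>j l m. if m \<noteq> l then c l j * r m / ((x m - x l)^j * (t - x m)) else (0::real))"
  define F3 where "F3 = (\<lambda>j l m i. if m \<noteq> l \<and> i \<le> j then c l j * r m / ((x m - x l)^(j-i+1) * (t - x l)^i) else (0::real))"
  have tne: "\<And>l. l \<in> I \<Longrightarrow> t - x l \<noteq> 0" using t by force
  have xne: "\<And>l m. l \<in> I \<Longrightarrow> m \<in> I \<Longrightarrow> m \<noteq> l \<Longrightarrow> x m \<noteq> x l"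
    using inj by (auto dest: inj_onD)
  have trm: "c l j * r m / ((t - x l)^j * (t - x m)) = F1 j l m + F2 j l m - (\<Sum>i=1..K. F3 j l m i)"
    if "l \<in> I" "m \<in> I" "j \<in> {1..K}" for l m j
  proof (cases "m = l")
    case True
    then show ?thesis by (simp add: F1_def F2_def F3_def power_Suc2 mult_ac)
  next
    case False
    have tp: "1 / ((t - x l)^j * (t - x m)) =
         1 / ((x m - x l)^j * (t - x m)) - (\<Sum>i\<in>{1..j}. 1 / ((x m - x l)^(j - i + 1) * (t - x l)^i))"
      by (rule two_pole) (use that False tne xne in auto)
    have "c l j * r m / ((t - x l)^j * (t - x m)) = (c l j * r m) * (1 / ((t - x l)^j * (t - x m)))"
      by simp
    also have "\<dots> = (c l j * r m) * (1 / ((x m - x l)^j * (t - x m))) -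
        (\<Sum>i\<in>{1..j}. (c l j * r m) * (1 / ((x m - x l)^(j - i + 1) * (t - x l)^i)))"
      by (subst tp, subst right_diff_distrib, subst sum_distrib_left, rule refl)
    also have "(\<Sum>i\<in>{1..j}. (c l j * r m) * (1 / ((x m - x l)^(j - i + 1) * (t - x l)^i)))
       = (\<Sum>i\<in>{1..K}. if i \<le> j then (c l j * r m) * (1 / ((x m - x l)^(j - i + 1) * (t - x l)^i)) else 0)"
      by (rule sum_upto_if) (use that in auto)
    also have "\<dots> = (\<Sum>i=1..K. F3 j l m i)"
      by (intro sum.cong refl) (use False in \<open>simp add: F3_def\<close>)
    finally show ?thesis using False by (simp add: F1_def F2_def)
  qed
  have RHS: "pf I x K c t * sf I x r t =
      (\<Sum>j=1..K. \<Sum>l\<in>I. \<Sum>m\<in>I. F1 j l m) + (\<Sum>j=1..K. \<Sum>l\<in>I. \<Sum>m\<in>I. F2 j l m)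
      - (\<Sum>j=1..K. \<Sum>l\<in>I. \<Sum>m\<in>I. \<Sum>i=1..K. F3 j l m i)"
  proof -
    have "pf I x K c t * sf I x r t = (\<Sum>j=1..K. \<Sum>l\<in>I. \<Sum>m\<in>I. c l j * r m / ((t - x l)^j * (t - x m)))"
      by (simp add: pf_def sf_def sum_distrib_left sum_distrib_right sum_divide_distrib mult_ac)
    also have "\<dots> = (\<Sum>j=1..K. \<Sum>l\<in>I. \<Sum>m\<in>I. F1 j l m + F2 j l m - (\<Sum>i=1..K. F3 j l m i))"
      by (intro sum.cong refl) (rule trm, auto)
    also have "\<dots> = (\<Sum>j=1..K. \<Sum>l\<in>I. \<Sum>m\<in>I. F1 j l m) + (\<Sum>j=1..K. \<Sum>l\<in>I. \<Sum>m\<in>I. F2 j l m)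
      - (\<Sum>j=1..K. \<Sum>l\<in>I. \<Sum>m\<in>I. \<Sum>i=1..K. F3 j l m i)"
      by (simp add: sum.distrib sum_subtractf)
    finally show ?thesis .
  qed
  define S2 where "S2 = (\<lambda>l'. \<Sum>l\<in>I. \<Sum>j=1..K. (if l \<noteq> l' then c l j * r l' / (x l' - x l)^j else (0::real)))"
  define S3 where "S3 = (\<lambda>l' j'. \<Sum>m\<in>I. \<Sum>j=1..K. (if m \<noteq> l' \<and> j' \<le> j then c l' j * r m / (x m - x l')^(j - j' + 1) else (0::real)))"
  have LHS: "pf I x (Suc K) (step I x K r c) t =
      (\<Sum>j'=1..Suc K. \<Sum>l'\<in>I. (if 2 \<le> j' then c l' (j'-1) * r l' else 0) / (t - x l')^j')
    + (\<Sum>j'=1..Suc K. \<Sum>l'\<in>I. (if j' = 1 then S2 l' else 0) / (t - x l')^j')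
    - (\<Sum>j'=1..Suc K. \<Sum>l'\<in>I. S3 l' j' / (t - x l')^j')"
  proof -
    have "pf I x (Suc K) (step I x K r c) t = (\<Sum>j'=1..Suc K. \<Sum>l'\<in>I.
        (if 2 \<le> j' then c l' (j'-1) * r l' else 0) / (t - x l')^j'
      + (if j' = 1 then S2 l' else 0) / (t - x l')^j' - S3 l' j' / (t - x l')^j')"
      unfolding pf_def
      by (intro sum.cong refl) (simp add: step_def S2_def S3_def add_divide_distrib diff_divide_distrib)
    then show ?thesis by (simp add: sum.distrib sum_subtractf)
  qed
  have E1: "(\<Sum>j'=1..Suc K. \<Sum>l'\<in>I. (if 2 \<le> j' then c l' (j'-1) * r l' else 0) / (t - x l')^j')
      = (\<Sum>j=1..K. \<Sum>l\<in>I. \<Sum>m\<in>I. F1 j l m)"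
  proof -
    have "{1..Suc K} = insert 1 {2..Suc K}" by auto
    then have "(\<Sum>j'=1..Suc K. \<Sum>l'\<in>I. (if 2 \<le> j' then c l' (j'-1) * r l' else 0) / (t - x l')^j')
      = (\<Sum>j'=2..Suc K. \<Sum>l'\<in>I. c l' (j'-1) * r l' / (t - x l')^j')"
      by (simp add: sum.insert)
    also have "\<dots> = (\<Sum>j=1..K. \<Sum>l'\<in>I. c l' j * r l' / (t - x l')^Suc j)"
      by (simp only: numeral_2_eq_2 sum.shift_bounds_cl_Suc_ivl One_nat_def) simp
    also have "\<dots> = (\<Sum>j=1..K. \<Sum>l\<in>I. \<Sum>m\<in>I. F1 j l m)"
      by (intro sum.cong refl) (simp add: F1_def sum.delta finI)
    finally show ?thesis .
  qed
  have E2: "(\<Sum>j'=1..Suc K. \<Sum>l'\<in>I. (if j' = 1 then S2 l' else 0) / (t - x l')^j')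
      = (\<Sum>j=1..K. \<Sum>l\<in>I. \<Sum>m\<in>I. F2 j l m)"
  proof -
    have "{1..Suc K} = insert 1 {2..Suc K}" by auto
    then have "(\<Sum>j'=1..Suc K. \<Sum>l'\<in>I. (if j' = 1 then S2 l' else 0) / (t - x l')^j')
      = (\<Sum>m\<in>I. S2 m / (t - x m))"
      by (simp add: sum.insert)
    also have "\<dots> = (\<Sum>m\<in>I. \<Sum>l\<in>I. \<Sum>j=1..K. F2 j l m)"
      unfolding S2_def F2_def sum_divide_distrib by (intro sum.cong refl) (auto simp: mult_ac)
    also have "\<dots> = (\<Sum>l\<in>I. \<Sum>m\<in>I. \<Sum>j=1..K. F2 j l m)"
      by (rule sum.swap)
    also have "\<dots> = (\<Sum>l\<in>I. \<Sum>j=1..K. \<Sum>m\<in>I. F2 j l m)"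
      by (intro sum.cong refl) (rule sum.swap)
    also have "\<dots> = (\<Sum>j=1..K. \<Sum>l\<in>I. \<Sum>m\<in>I. F2 j l m)"
      by (rule sum.swap)
    finally show ?thesis .
  qed
  have E3: "(\<Sum>j'=1..Suc K. \<Sum>l'\<in>I. S3 l' j' / (t - x l')^j')
      = (\<Sum>j=1..K. \<Sum>l\<in>I. \<Sum>m\<in>I. \<Sum>i=1..K. F3 j l m i)"
  proof -
    have z: "S3 l' (Suc K) = 0" for l' by (simp add: S3_def)
    have "(\<Sum>j'=1..Suc K. \<Sum>l'\<in>I. S3 l' j' / (t - x l')^j') = (\<Sum>i=1..K. \<Sum>l\<in>I. S3 l i / (t - x l)^i)"
      by (simp add: z)
    also have "\<dots> = (\<Sum>i=1..K. \<Sum>l\<in>I. \<Sum>m\<in>I. \<Sum>j=1..K. F3 j l m i)"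
      unfolding S3_def F3_def sum_divide_distrib by (intro sum.cong refl) (auto simp: mult_ac)
    also have "\<dots> = (\<Sum>i=1..K. \<Sum>l\<in>I. \<Sum>j=1..K. \<Sum>m\<in>I. F3 j l m i)"
      by (intro sum.cong refl) (rule sum.swap)
    also have "\<dots> = (\<Sum>i=1..K. \<Sum>j=1..K. \<Sum>l\<in>I. \<Sum>m\<in>I. F3 j l m i)"
      by (intro sum.cong refl) (rule sum.swap)
    also have "\<dots> = (\<Sum>j=1..K. \<Sum>i=1..K. \<Sum>l\<in>I. \<Sum>m\<in>I. F3 j l m i)"
      by (rule sum.swap)
    also have "\<dots> = (\<Sum>j=1..K. \<Sum>l\<in>I. \<Sum>i=1..K. \<Sum>m\<in>I. F3 j l m i)"
      by (intro sum.cong refl) (rule sum.swap)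
    also have "\<dots> = (\<Sum>j=1..K. \<Sum>l\<in>I. \<Sum>m\<in>I. \<Sum>i=1..K. F3 j l m i)"
      by (intro sum.cong refl) (rule sum.swap)
    finally show ?thesis .
  qed
  show ?thesis using LHS RHS E1 E2 E3 by simp
qed


lemma if_Ints: "(P \<Longrightarrow> a \<in> \<int>) \<Longrightarrow> (if P then a else 0) \<in> \<int>"
  by auto

lemma step_int:
  assumes finI: "finite I" and D: "D \<in> \<int>" and r: "\<And>l. l \<in> I \<Longrightarrow> r l \<in> \<int>"
    and xD: "\<And>l m. l \<in> I \<Longrightarrow> m \<in> I \<Longrightarrow> m \<noteq> l \<Longrightarrow> D / (x m - x l) \<in> \<int>"
    and inv: "\<And>l j. 1 \<le> j \<Longrightarrow> j \<le> K \<Longrightarrow> D^(K-j) * c l j \<in> \<int>"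
    and j: "1 \<le> j" "j \<le> Suc K"
  shows "D^(Suc K - j) * step I x K r c l j \<in> \<int>"
proof (cases "l \<in> I")
  case False
  then show ?thesis by (simp add: step_def)
next
  case lI: True
  have a1: "D^(Suc K - j) * (if 2 \<le> j then c l (j-1) * r l else 0) \<in> \<int>"
  proof (cases "2 \<le> j")
    case True
    have "D^(Suc K - j) * (c l (j-1) * r l) = (D^(K - (j-1)) * c l (j-1)) * r l"
      using True j by (simp add: Suc_diff_le)
    also have "\<dots> \<in> \<int>" by (rule Ints_mult[OF inv r[OF lI]]) (use True j in auto)
    finally show ?thesis using True by simp
  qed simp
  have a2: "D^(Suc K - j) * (if j = 1 then (\<Sum>l'\<in>I. \<Sum>j'=1..K. (if l' \<noteq> l then c l' j' * r l / (x l - x l')^j' else 0)) else 0) \<in> \<int>"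
  proof (cases "j = 1")
    case True
    have "D^(Suc K - j) * (\<Sum>l'\<in>I. \<Sum>j'=1..K. (if l' \<noteq> l then c l' j' * r l / (x l - x l')^j' else 0))
       = (\<Sum>l'\<in>I. \<Sum>j'=1..K. (if l' \<noteq> l then (D^(K-j') * c l' j') * r l * (D / (x l - x l'))^j' else 0))"
      unfolding sum_distrib_left
    proof (intro sum.cong refl)
      fix l' j' assume "l' \<in> I" "j' \<in> {1..K}"
      then have "D^K = D^(K-j') * D^j'" by (simp add: power_add[symmetric])
      then show "D ^ (Suc K - j) * (if l' \<noteq> l then c l' j' * r l / (x l - x l') ^ j' else 0) =
          (if l' \<noteq> l then D ^ (K - j') * c l' j' * r l * (D / (x l - x l')) ^ j' else 0)"
        using True by (simp add: power_divide)
    qed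
    also have "\<dots> \<in> \<int>"
      by (intro Ints_sum if_Ints Ints_mult[OF Ints_mult[OF inv r] Ints_power[OF xD]]) (use lI in auto)
    finally show ?thesis using True by simp
  qed simp
  have a3: "D^(Suc K - j) * (\<Sum>m\<in>I. \<Sum>j'=1..K. (if m \<noteq> l \<and> j \<le> j' then c l j' * r m / (x m - x l)^(j' - j + 1) else 0)) \<in> \<int>"
  proof -
    have "D^(Suc K - j) * (\<Sum>m\<in>I. \<Sum>j'=1..K. (if m \<noteq> l \<and> j \<le> j' then c l j' * r m / (x m - x l)^(j' - j + 1) else 0))
       = (\<Sum>m\<in>I. \<Sum>j'=1..K. (if m \<noteq> l \<and> j \<le> j' then (D^(K-j') * c l j') * r m * (D / (x m - x l))^(j' - j + 1) else 0))"
      unfolding sum_distrib_left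
    proof (intro sum.cong refl)
      fix m j' assume "m \<in> I" "j' \<in> {1..K}"
      show "D ^ (Suc K - j) * (if m \<noteq> l \<and> j \<le> j' then c l j' * r m / (x m - x l) ^ (j' - j + 1) else 0) =
         (if m \<noteq> l \<and> j \<le> j' then D ^ (K - j') * c l j' * r m * (D / (x m - x l)) ^ (j' - j + 1) else 0)"
      proof (cases "m \<noteq> l \<and> j \<le> j'")
        case True
        with \<open>j' \<in> {1..K}\<close> have "Suc K - j = (K - j') + (j' - j + 1)" by auto
        then have "D^(Suc K - j) = D^(K-j') * D^(j' - j + 1)"
          by (simp only: power_add)
        then show ?thesis using True by (simp add: power_divide)
      next
        case False
        show ?thesis by (simp only: if_not_P[OF False] mult_zero_right)
      qed
    qed
    also have "\<dots> \<in> \<int>"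
      by (intro Ints_sum if_Ints Ints_mult[OF Ints_mult[OF inv r] Ints_power[OF xD]]) (use lI in auto)
    finally show ?thesis .
  qed
  have "D^(Suc K - j) * step I x K r c l j =
      D^(Suc K - j) * (if 2 \<le> j then c l (j-1) * r l else 0)
    + D^(Suc K - j) * (if j = 1 then (\<Sum>l'\<in>I. \<Sum>j'=1..K. (if l' \<noteq> l then c l' j' * r l / (x l - x l')^j' else 0)) else 0)
    - D^(Suc K - j) * (\<Sum>m\<in>I. \<Sum>j'=1..K. (if m \<noteq> l \<and> j \<le> j' then c l j' * r m / (x m - x l)^(j' - j + 1) else 0))"
    using lI j unfolding step_def by (simp add: algebra_simps)
  also have "\<dots> \<in> \<int>" using a1 a2 a3 by (intro Ints_add Ints_diff)
  finally show ?thesis .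
qed


lemma abs_div_pow_le:
  fixes a y :: real
  assumes "1 \<le> \<bar>y\<bar>"
  shows "\<bar>a / y^e\<bar> \<le> \<bar>a\<bar>"
proof -
  have "1 \<le> \<bar>y\<bar>^e" using assms by (simp add: one_le_power)
  then have "\<bar>a\<bar> / \<bar>y\<bar>^e \<le> \<bar>a\<bar>"
    by (simp add: divide_le_eq mult_le_cancel_left1 mult.commute[of _ "\<bar>a\<bar>"] mult_left_mono[of 1 _ "\<bar>a\<bar>", simplified])
  then show ?thesis by (simp add: power_abs)
qed

lemma abs_div_pow_le':
  fixes a y :: real
  assumes "1 \<le> \<bar>y\<bar>"
  shows "\<bar>a\<bar> / \<bar>y^e\<bar> \<le> \<bar>a\<bar>"
  using abs_div_pow_le[OF assms, of a e] by simp

lemma ifdiv_le: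
  fixes a b y :: real
  assumes "P \<Longrightarrow> 1 \<le> \<bar>y\<bar>"
  shows "\<bar>if P then a * b / y^e else 0\<bar> \<le> \<bar>a\<bar> * \<bar>b\<bar>"
  using abs_div_pow_le[of y "a*b" e] assms by (auto simp: abs_mult)

lemma step_bound:
  assumes finI: "finite I"
    and dist: "\<And>l m. l \<in> I \<Longrightarrow> m \<in> I \<Longrightarrow> m \<noteq> l \<Longrightarrow> 1 \<le> \<bar>x m - x l\<bar>"
  shows "(\<Sum>l\<in>I. \<Sum>j=1..Suc K. \<bar>step I x K r c l j\<bar>)
       \<le> (K+3) * (\<Sum>l\<in>I. \<Sum>j=1..K. \<bar>c l j\<bar>) * (\<Sum>m\<in>I. \<bar>r m\<bar>)"
proof -
  define S where "S = (\<Sum>l\<in>I. \<Sum>j=1..K. \<bar>c l j\<bar>)"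
  define M where "M = (\<Sum>m\<in>I. \<bar>r m\<bar>)"
  define B1 where "B1 = (\<lambda>l j'. if 2 \<le> j' then \<bar>c l (j'-1)\<bar> * \<bar>r l\<bar> else 0)"
  define B2 where "B2 = (\<lambda>l j'. if j' = (1::nat) then S * \<bar>r l\<bar> else 0)"
  define B3 where "B3 = (\<lambda>l. \<Sum>m\<in>I. \<Sum>j=1..K. \<bar>c l j\<bar> * \<bar>r m\<bar>)"
  have S0: "S \<ge> 0" and M0: "M \<ge> 0" by (auto simp: S_def M_def intro!: sum_nonneg)
  have pt: "\<bar>step I x K r c l j'\<bar> \<le> B1 l j' + B2 l j' + B3 l" if lI: "l \<in> I" and j': "j' \<in> {1..Suc K}" for l j'
  proof -
    have st: "step I x K r c l j' =
      (if 2 \<le> j' then c l (j'-1) * r l else 0)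
    + (if j' = 1 then (\<Sum>l'\<in>I. \<Sum>j=1..K. (if l' \<noteq> l then c l' j * r l / (x l - x l')^j else 0)) else 0)
    - (\<Sum>m\<in>I. \<Sum>j=1..K. (if m \<noteq> l \<and> j' \<le> j then c l j * r m / (x m - x l)^(j - j' + 1) else 0))"
      using lI j' by (simp add: step_def)
    have b1: "\<bar>if 2 \<le> j' then c l (j'-1) * r l else 0\<bar> \<le> B1 l j'"
      by (simp add: B1_def abs_mult)
    have b2: "\<bar>if j' = 1 then (\<Sum>l'\<in>I. \<Sum>j=1..K. (if l' \<noteq> l then c l' j * r l / (x l - x l')^j else 0)) else 0\<bar> \<le> B2 l j'"
    proof (cases "j' = 1")
      case True
      have "\<bar>\<Sum>l'\<in>I. \<Sum>j=1..K. (if l' \<noteq> l then c l' j * r l / (x l - x l')^j else 0)\<bar>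
          \<le> (\<Sum>l'\<in>I. \<Sum>j=1..K. \<bar>if l' \<noteq> l then c l' j * r l / (x l - x l')^j else 0\<bar>)"
        by (rule order_trans[OF sum_abs]) (intro sum_mono sum_abs)
      also have "\<dots> \<le> (\<Sum>l'\<in>I. \<Sum>j=1..K. \<bar>c l' j\<bar> * \<bar>r l\<bar>)"
        by (intro sum_mono ifdiv_le) (use dist lI in auto)
      also have "\<dots> = S * \<bar>r l\<bar>" by (simp add: S_def sum_distrib_right)
      finally show ?thesis using True by (simp add: B2_def)
    qed (simp add: B2_def)
    have b3: "\<bar>\<Sum>m\<in>I. \<Sum>j=1..K. (if m \<noteq> l \<and> j' \<le> j then c l j * r m / (x m - x l)^(j - j' + 1) else 0)\<bar> \<le> B3 l"
    proof -
      have "\<bar>\<Sum>m\<in>I. \<Sum>j=1..K. (if m \<noteq> l \<and> j' \<le> j then c l j * r m / (x m - x l)^(j - j' + 1) else 0)\<bar>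
          \<le> (\<Sum>m\<in>I. \<Sum>j=1..K. \<bar>if m \<noteq> l \<and> j' \<le> j then c l j * r m / (x m - x l)^(j - j' + 1) else 0\<bar>)"
        by (rule order_trans[OF sum_abs]) (intro sum_mono sum_abs)
      also have "\<dots> \<le> B3 l"
        unfolding B3_def
        by (intro sum_mono ifdiv_le) (use dist lI in auto)
      finally show ?thesis .
    qed
    show ?thesis unfolding st using b1 b2 b3 by linarith
  qed
  have "(\<Sum>l\<in>I. \<Sum>j=1..Suc K. \<bar>step I x K r c l j\<bar>) \<le> (\<Sum>l\<in>I. \<Sum>j=1..Suc K. B1 l j + B2 l j + B3 l)"
    by (intro sum_mono pt) auto
  also have "\<dots> = (\<Sum>l\<in>I. \<Sum>j=1..Suc K. B1 l j) + (\<Sum>l\<in>I. \<Sum>j=1..Suc K. B2 l j) + (Suc K) * (\<Sum>l\<in>I. B3 l)"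
    by (simp add: sum.distrib sum_distrib_left)
  finally have X0: "(\<Sum>l\<in>I. \<Sum>j=1..Suc K. \<bar>step I x K r c l j\<bar>) \<le> (\<Sum>l\<in>I. \<Sum>j=1..Suc K. B1 l j) + (\<Sum>l\<in>I. \<Sum>j=1..Suc K. B2 l j) + (Suc K) * (\<Sum>l\<in>I. B3 l)" .
  have X1: "(\<Sum>l\<in>I. \<Sum>j=1..Suc K. B1 l j) \<le> S * M"
  proof -
    have "{1..Suc K} = insert 1 {2..Suc K}" by auto
    then have "(\<Sum>l\<in>I. \<Sum>j=1..Suc K. B1 l j) = (\<Sum>l\<in>I. \<Sum>j=2..Suc K. \<bar>c l (j-1)\<bar> * \<bar>r l\<bar>)"
      by (simp add: sum.insert B1_def)
    also have "\<dots> = (\<Sum>l\<in>I. \<Sum>j=1..K. \<bar>c l j\<bar> * \<bar>r l\<bar>)"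
      by (simp only: numeral_2_eq_2 sum.shift_bounds_cl_Suc_ivl One_nat_def) simp
    also have "\<dots> \<le> (\<Sum>l\<in>I. \<Sum>j=1..K. \<bar>c l j\<bar> * M)"
      unfolding M_def
      by (intro sum_mono mult_left_mono member_le_sum[where f = "\<lambda>m. \<bar>r m\<bar>"]) (auto simp: finI)
    also have "\<dots> = S * M" by (simp add: S_def sum_distrib_right)
    finally show ?thesis .
  qed
  have X2: "(\<Sum>l\<in>I. \<Sum>j=1..Suc K. B2 l j) = S * M"
  proof -
    have "{1..Suc K} = insert 1 {2..Suc K}" by auto
    then show ?thesis by (simp add: B2_def M_def sum_distrib_left sum.insert)
  qed
  have X3: "(\<Sum>l\<in>I. B3 l) = S * M"
    unfolding B3_def S_def M_def sum_distrib_left sum_distrib_right by (rule sum.swap)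
  have X: "(\<Sum>l\<in>I. \<Sum>j=1..Suc K. \<bar>step I x K r c l j\<bar>) \<le> S * M + S * M + real (Suc K) * (S * M)"
    using X0[unfolded X3] X1 X2 by linarith
  show ?thesis unfolding S_def[symmetric] M_def[symmetric] using X by (simp add: algebra_simps)
qed


lemma pf_unique_step:
  fixes x :: "int \<Rightarrow> real" and A :: "int \<Rightarrow> nat \<Rightarrow> real"
  assumes finI: "finite I" and inj: "inj_on x I"
    and zero: "\<And>t. t \<notin> x ` I \<Longrightarrow> (\<Sum>j=1..K. \<Sum>l\<in>I. A l j / (t - x l)^j) = 0"
    and l0: "l0 \<in> I" and J: "1 \<le> J" "J \<le> K"
    and higher: "\<And>j. J < j \<Longrightarrow> j \<le> K \<Longrightarrow> A l0 j = 0"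
  shows "A l0 J = 0"
proof -
  define x0 where "x0 = x l0"
  define h where "h = (\<lambda>t. (\<Sum>j=1..J. A l0 j * (t - x0)^(J-j))
      + (\<Sum>j=1..K. \<Sum>l\<in>I-{l0}. A l j * (t - x0)^J / (t - x l)^j))"
  have xne: "x l \<noteq> x0" if "l \<in> I - {l0}" for l
    using that l0 inj unfolding x0_def by (auto dest: inj_onD)
  have ev: "eventually (\<lambda>t. h t = 0) (at x0)"
  proof -
    have "eventually (\<lambda>t. \<forall>y\<in>x`I. t \<noteq> y) (at x0)"
      using finI by (intro eventually_ball_finite) (auto intro: eventually_neq_at_within)
    then show ?thesis
    proof (rule eventually_mono)
      fix t assume t: "\<forall>y\<in>x`I. t \<noteq> y"
      then have tI: "t \<notin> x ` I" by auto
      have tx0: "t - x0 \<noteq> 0" using t l0 unfolding x0_def by auto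
      have "(t - x0)^J * (\<Sum>j=1..K. \<Sum>l\<in>I. A l j / (t - x l)^j) = 0" using zero[OF tI] by simp
      also have "(t - x0)^J * (\<Sum>j=1..K. \<Sum>l\<in>I. A l j / (t - x l)^j)
          = (\<Sum>j=1..K. A l0 j * (t - x0)^J / (t - x0)^j)
            + (\<Sum>j=1..K. \<Sum>l\<in>I-{l0}. A l j * (t - x0)^J / (t - x l)^j)"
        using finI l0
        by (simp add: sum.remove[of I l0] sum.distrib x0_def distrib_left sum_distrib_left mult_ac)
      also have "(\<Sum>j=1..K. A l0 j * (t - x0)^J / (t - x0)^j) = (\<Sum>j=1..J. A l0 j * (t - x0)^(J-j))"
      proof -
        have "(\<Sum>j=1..K. A l0 j * (t - x0)^J / (t - x0)^j) = (\<Sum>j=1..J. A l0 j * (t - x0)^J / (t - x0)^j)"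
          by (rule sum.mono_neutral_cong_right) (use J higher in auto)
        also have "\<dots> = (\<Sum>j=1..J. A l0 j * (t - x0)^(J-j))"
        proof (intro sum.cong refl)
          fix j assume "j \<in> {1..J}"
          then have "(t - x0)^J = (t - x0)^(J-j) * (t - x0)^j" by (simp add: power_add[symmetric])
          then show "A l0 j * (t - x0)^J / (t - x0)^j = A l0 j * (t - x0)^(J-j)"
            using tx0 by simp
        qed
        finally show ?thesis .
      qed
      finally show "h t = 0" by (simp add: h_def)
    qed
  qed
  have cont: "isCont h x0"
    unfolding h_def by (intro continuous_intros) (use xne in force)+
  have h0: "h x0 = A l0 J"
  proof -
    have "(\<Sum>j=1..J. A l0 j * (x0 - x0)^(J-j)) = (\<Sum>j=1..J. if j = J then A l0 J else 0)"
      by (intro sum.cong refl) auto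
    also have "\<dots> = A l0 J" using J by simp
    finally show ?thesis using J by (simp add: h_def power_0_left)
  qed
  have "(h \<longlongrightarrow> h x0) (at x0)" using cont by (simp add: isCont_def)
  moreover have "(h \<longlongrightarrow> 0) (at x0)" using ev by (rule tendsto_eventually)
  ultimately have "h x0 = 0" by (rule tendsto_unique[rotated]) simp
  then show ?thesis using h0 by simp
qed

lemma pf_unique:
  fixes x :: "int \<Rightarrow> real" and A :: "int \<Rightarrow> nat \<Rightarrow> real"
  assumes finI: "finite I" and inj: "inj_on x I"
    and zero: "\<And>t. t \<notin> x ` I \<Longrightarrow> (\<Sum>j=1..K. \<Sum>l\<in>I. A l j / (t - x l)^j) = 0"
    and l0: "l0 \<in> I"
  shows "\<forall>J. 1 \<le> J \<longrightarrow> J \<le> K \<longrightarrow> A l0 J = 0"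
proof -
  have "\<forall>J. K - J = m \<longrightarrow> 1 \<le> J \<longrightarrow> J \<le> K \<longrightarrow> A l0 J = 0" for m
  proof (induction m rule: less_induct)
    case (less m)
    show ?case
    proof (intro allI impI)
      fix J assume m: "K - J = m" and J: "1 \<le> J" "J \<le> K"
      show "A l0 J = 0"
      proof (rule pf_unique_step[OF finI inj zero l0 J])
        fix j assume "J < j" "j \<le> K"
        then show "A l0 j = 0" using less[of "K - j"] m by auto
      qed auto
    qed
  qed
  then show ?thesis by auto
qed


lemma lagrange_pf:
  fixes x :: "int \<Rightarrow> real" and N :: "real poly"
  assumes finI: "finite I" and inj: "inj_on x I" and deg: "degree N < card I" and t: "t \<notin> x ` I"
  shows "poly N t / (\<Prod>l\<in>I. (t - x l)) =
         (\<Sum>l\<in>I. (poly N (x l) / (\<Prod>l'\<in>I-{l}. (x l - x l'))) / (t - x l))"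
proof -
  define w where "w = (\<lambda>l. poly N (x l) / (\<Prod>l'\<in>I-{l}. (x l - x l')))"
  define L where "L = (\<Sum>l\<in>I. smult (w l) (\<Prod>l'\<in>I-{l}. [:-x l', 1:]))"
  have xne: "x l \<noteq> x l'" if "l \<in> I" "l' \<in> I" "l \<noteq> l'" for l l'
    using that inj by (auto dest: inj_onD)
  have polyL: "poly L s = (\<Sum>l\<in>I. w l * (\<Prod>l'\<in>I-{l}. (s - x l')))" for s
    by (simp add: L_def poly_sum poly_prod)
  have evalL: "poly L (x m) = poly N (x m)" if m: "m \<in> I" for m
  proof -
    have "poly L (x m) = (\<Sum>l\<in>I. if l = m then w m * (\<Prod>l'\<in>I-{m}. (x m - x l')) else 0)"
      unfolding polyL
    proof (intro sum.cong refl)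
      fix l assume l: "l \<in> I"
      show "w l * (\<Prod>l'\<in>I-{l}. (x m - x l')) = (if l = m then w m * (\<Prod>l'\<in>I-{m}. (x m - x l')) else 0)"
      proof (cases "l = m")
        case False
        then have "(\<Prod>l'\<in>I-{l}. (x m - x l')) = 0"
          using finI m by (intro prod_zero) auto
        then show ?thesis using False by simp
      qed simp
    qed
    also have "\<dots> = w m * (\<Prod>l'\<in>I-{m}. (x m - x l'))" using finI m by simp
    also have "\<dots> = poly N (x m)"
    proof -
      have "(\<Prod>l'\<in>I-{m}. (x m - x l')) \<noteq> 0"
        using finI m xne by (subst prod_zero_iff) auto
      then show ?thesis by (simp add: w_def)
    qed
    finally show ?thesis .
  qed
  have degL: "degree L < card I"
  proof -
    have "I \<noteq> {}" using deg by auto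
    then have cpos: "card I > 0" using finI by (simp add: card_gt_0_iff)
    have "degree L \<le> card I - 1"
      unfolding L_def
    proof (intro degree_sum_le finI)
      fix l assume l: "l \<in> I"
      have "degree (smult (w l) (\<Prod>l'\<in>I-{l}. [:-x l', 1:])) \<le> degree (\<Prod>l'\<in>I-{l}. [:-x l', 1:])"
        by (rule degree_smult_le)
      also have "\<dots> \<le> sum (degree \<circ> (\<lambda>l'. [:-x l', 1:])) (I-{l})"
        using finI by (intro degree_prod_sum_le) auto
      also have "\<dots> = card (I - {l})" by simp
      also have "\<dots> = card I - 1" using l finI by simp
      finally show "degree (smult (w l) (\<Prod>l'\<in>I-{l}. [:-x l', 1:])) \<le> card I - 1" .
    qed
    then show ?thesis using cpos by linarith
  qed
  have NL: "N = L"
  proof (rule poly_eqI_degree[of "x ` I"])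
    show "\<And>s. s \<in> x ` I \<Longrightarrow> poly N s = poly L s" using evalL by auto
    show "degree N < card (x ` I)" using deg inj by (simp add: card_image)
    show "degree L < card (x ` I)" using degL inj by (simp add: card_image)
  qed
  have tne: "t - x l \<noteq> 0" if "l \<in> I" for l using t that by force
  have P0: "(\<Prod>l\<in>I. (t - x l)) \<noteq> 0" using finI tne by (subst prod_zero_iff) auto
  have "poly N t / (\<Prod>l\<in>I. (t - x l)) = (\<Sum>l\<in>I. w l * (\<Prod>l'\<in>I-{l}. (t - x l')) / (\<Prod>l\<in>I. (t - x l)))"
    by (simp add: NL polyL sum_divide_distrib)
  also have "\<dots> = (\<Sum>l\<in>I. w l / (t - x l))"
  proof (intro sum.cong refl)
    fix l assume l: "l \<in> I"
    have "(\<Prod>l\<in>I. (t - x l)) = (t - x l) * (\<Prod>l'\<in>I-{l}. (t - x l'))"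
      using finI l by (simp add: prod.remove)
    moreover have "(\<Prod>l'\<in>I-{l}. (t - x l')) \<noteq> 0" using finI tne by (subst prod_zero_iff) auto
    ultimately show "w l * (\<Prod>l'\<in>I-{l}. (t - x l')) / (\<Prod>l\<in>I. (t - x l)) = w l / (t - x l)"
      using tne[OF l] by simp
  qed
  finally show ?thesis by (simp add: w_def)
qed




lemma abs_prod_idom:
  fixes f :: "'a \<Rightarrow> 'b::linordered_idom"
  shows "\<bar>prod f A\<bar> = prod (\<lambda>x. \<bar>f x\<bar>) A"
  by (induction A rule: infinite_finite_induct) (auto simp: abs_mult)

lemma prod_neg_interval:
  fixes l :: int and n :: nat
  assumes "-int n \<le> l" "l \<le> int n"
  shows "(\<Prod>l'\<in>{-int n..l-1}. l - l') = fact (nat (l + int n))"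
proof -
  have "(\<Prod>l'\<in>{-int n..l-1}. l - l') = (\<Prod>u\<in>{1..nat (l + int n)}. int u)"
    by (rule prod.reindex_bij_witness[where i = "\<lambda>u. l - int u" and j = "\<lambda>l'. nat (l - l')"]) (use assms in auto)
  also have "\<dots> = fact (nat (l + int n))" by (simp add: fact_prod)
  finally show ?thesis .
qed

lemma prod_pos_interval:
  fixes l :: int and n :: nat
  assumes "-int n \<le> l" "l \<le> int n"
  shows "(\<Prod>l'\<in>{l+1..int n}. l' - l) = fact (nat (int n - l))"
proof -
  have "(\<Prod>l'\<in>{l+1..int n}. l' - l) = (\<Prod>u\<in>{1..nat (int n - l)}. int u)"
    by (rule prod.reindex_bij_witness[where i = "\<lambda>u. l + int u" and j = "\<lambda>l'. nat (l' - l)"]) (use assms in auto)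
  also have "\<dots> = fact (nat (int n - l))" by (simp add: fact_prod)
  finally show ?thesis .
qed

lemma block_interval:
  fixes g :: "nat \<Rightarrow> real"
  shows "(\<Prod>L\<in>{c<..c+p}. g L) = (\<Prod>k<p. g (c + 1 + k))"
  by (rule prod.reindex_bij_witness[where i = "\<lambda>k. c + 1 + k" and j = "\<lambda>L. L - c - 1"]) auto

lemma block_prod:
  fixes g :: "nat \<Rightarrow> real"
  shows "(\<Prod>L\<in>{m<..m+p*q}. g L) = (\<Prod>i<q. \<Prod>k<p. g (m + p*i + 1 + k))"
proof (induction q)
  case 0
  then show ?case by simp
next
  case (Suc q)
  have "{m<..m+p*Suc q} = {m<..m+p*q} \<union> {m+p*q<..m+p*q+p}" by auto
  then have "(\<Prod>L\<in>{m<..m+p*Suc q}. g L) = (\<Prod>L\<in>{m<..m+p*q}. g L) * (\<Prod>L\<in>{m+p*q<..m+p*q+p}. g L)"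
    by (simp add: prod.union_disjoint[symmetric] ivl_disj_int)
  also have "(\<Prod>L\<in>{m+p*q<..m+p*q+p}. g L) = (\<Prod>k<p. g (m + p*q + 1 + k))"
    by (rule block_interval)
  finally show ?case using Suc by simp
qed

lemma prod_consec: "(\<Prod>k<p. real (c+1+k)) = fact (c+p) / fact c"
proof (induction p)
  case 0 then show ?case by simp
next
  case (Suc p)
  have "(\<Prod>k<Suc p. real (c+1+k)) = (fact (c+p) / fact c) * real (c+1+p)"
    using Suc by simp
  also have "\<dots> = fact (c + Suc p) / fact c"
    by (simp add: algebra_simps)
  finally show ?case .
qed

lemma telescope_fact: "(\<Prod>i<q. (fact (c + p*i + p) / fact (c + p*i) :: real)) = fact (c + p*q) / fact c"
proof (induction q)
  case 0 then show ?case by simp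
next
  case (Suc q)
  have "(\<Prod>i<Suc q. (fact (c + p*i + p) / fact (c + p*i) :: real)) =
      fact (c + p*q) / fact c * (fact (c + p*q + p) / fact (c + p*q))"
    using Suc by simp
  also have "\<dots> = fact (c + p * Suc q) / fact c"
    by (simp add: algebra_simps)
  finally show ?case .
qed

lemma binom_pow_bound:
  assumes "k \<le> N"
  shows "real (N choose k) * real k ^ k * real (N-k) ^ (N-k) \<le> real N ^ N"
proof -
  have "real N ^ N = (real k + real (N-k)) ^ N" using assms by simp
  also have "\<dots> = (\<Sum>i\<le>N. real (N choose i) * real k ^ i * real (N-k) ^ (N-i))"
    by (simp add: binomial_ring)
  also have "\<dots> \<ge> real (N choose k) * real k ^ k * real (N-k) ^ (N-k)"
    by (rule member_le_sum[where f = "\<lambda>i. real (N choose i) * real k ^ i * real (N-k) ^ (N-i)"])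
       (use assms in auto)
  finally show ?thesis .
qed

lemma multinom_bound:
  assumes K: "K \<ge> 1" and m: "m \<ge> 1"
  shows "fact (K + q*m) / (fact K * fact m ^ q) \<le> real (K+q*m) ^ (K+q*m) / (real K ^ K * real m ^ (q*m))"
proof (induction q)
  case 0 then show ?case using K by simp
next
  case (Suc q)
  define N where "N = K + q*m + m"
  have N1: "K + Suc q * m = N" by (simp add: N_def)
  have Nm: "N - m = K + q*m" by (simp add: N_def)
  have "real (K+q*m) > 0" using K by (simp only: of_nat_0_less_iff)
  then have pos1: "real (K+q*m) ^ (K+q*m) > 0" by (rule zero_less_power)
  have posm: "real m ^ m > 0" using m by simp
  have posK: "real K ^ K > 0" using K by simp
  have posmq: "real m ^ (q*m) > 0" using m by simp
  have eq1: "fact (K + Suc q * m) / (fact K * fact m ^ Suc q) =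
      (fact (K + q*m) / (fact K * fact m ^ q)) * real (N choose m)"
    using binomial_fact[of m N, where 'a = real] by (simp add: N1 Nm N_def field_simps)
  have c0: "real (N choose m) * (real m ^ m * real (K + q*m) ^ (K+q*m)) \<le> real N ^ N"
    using binom_pow_bound[of m N] by (simp add: Nm N_def mult_ac)
  have c1: "real (N choose m) \<le> real N ^ N / (real m ^ m * real (K + q*m) ^ (K+q*m))"
    using c0 pos1 posm by (simp add: pos_le_divide_eq)
  have "(fact (K + q*m) / (fact K * fact m ^ q)) * real (N choose m) \<le>
      (real (K+q*m) ^ (K+q*m) / (real K ^ K * real m ^ (q*m))) * (real N ^ N / (real m ^ m * real (K + q*m) ^ (K+q*m)))"
    by (rule mult_mono[OF Suc c1 less_imp_le[OF divide_pos_pos[OF pos1 mult_pos_pos[OF posK posmq]]]]) simp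
  also have "\<dots> = real N ^ N / (real K ^ K * real m ^ (Suc q * m))"
  proof -
    have e: "real m ^ (Suc q * m) = real m ^ m * real m ^ (q*m)" by (simp add: power_add)
    define A where "A = real (K+q*m) ^ (K+q*m)"
    define B where "B = real K ^ K"
    define C where "C = real m ^ (q*m)"
    define E where "E = real m ^ m"
    define X where "X = real N ^ N"
    have "A \<noteq> 0" "B \<noteq> 0" "C \<noteq> 0" "E \<noteq> 0"
      unfolding A_def B_def C_def E_def using pos1 posK posmq posm by (metis less_irrefl)+
    then have "A / (B * C) * (X / (E * A)) = X / (B * (E * C))" by (simp add: field_simps)
    then show ?thesis unfolding e by (simp add: A_def B_def C_def E_def X_def)
  qed
  finally have fin: "(fact (K + q*m) / (fact K * fact m ^ q)) * real (N choose m) \<le> real N ^ N / (real K ^ K * real m ^ (Suc q * m))" .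
  show ?case unfolding N1 eq1[unfolded N1] by (rule fin)
qed

locale pfsetup =
  fixes d a b n :: nat
  assumes d: "d > 0" and a: "a > 0" and b: "b > 0" and ab: "2 * b \<le> a" and n: "n \<ge> 1"
begin

definition I :: "int set" where "I = {-int n..int n}"
definition x :: "int \<Rightarrow> real" where "x l = real d * of_int l"
definition s :: "nat \<Rightarrow> nat" where "s i = d*n + 2*n*i + 1"
definition Np :: "nat \<Rightarrow> real poly" where
  "Np i = (if i < b then (\<Prod>k<2*n. [:-real (s i + k), 1:])
           else if i < 2*b then (\<Prod>k<2*n. [:real (s (i-b) + k), 1:])
           else [:fact (2*n):])"
definition fpc :: "nat \<Rightarrow> real \<Rightarrow> real" where
  "fpc i t = real d ^ (2*n) * poly (Np i) t / (\<Prod>l\<in>I. (t - x l))"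
definition r :: "nat \<Rightarrow> int \<Rightarrow> real" where
  "r i l = real d ^ (2*n) * poly (Np i) (x l) / (\<Prod>l'\<in>I-{l}. (x l - x l'))"
definition W :: "int \<Rightarrow> int" where "W l = (\<Prod>l'\<in>I-{l}. (l - l'))"
definition Nint :: "nat \<Rightarrow> int \<Rightarrow> int" where
  "Nint i l = (if i < b then (\<Prod>k<2*n. int d * l - int (s i + k))
           else if i < 2*b then (\<Prod>k<2*n. int d * l + int (s (i-b) + k))
           else fact (2*n))"

lemma finI[simp]: "finite I" by (simp add: I_def)
lemma cardI: "card I = 2*n + 1" by (simp add: I_def)
lemma inj_x: "inj_on x I" using d by (auto simp: inj_on_def x_def)

lemma degree_Np: "degree (Np i) \<le> 2*n"
proof -
  have "degree (\<Prod>k<2*n. [:-real (s i + k), 1:]) \<le> 2*n"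
    by (rule order_trans[OF degree_prod_sum_le]) auto
  moreover have "degree (\<Prod>k<2*n. [:real (s (i-b) + k), 1:]) \<le> 2*n"
    by (rule order_trans[OF degree_prod_sum_le]) auto
  ultimately show ?thesis by (simp add: Np_def)
qed

lemma fpc_sf:
  assumes t: "t \<notin> x ` I"
  shows "fpc i t = sf I x (r i) t"
proof -
  have "poly (Np i) t / (\<Prod>l\<in>I. (t - x l)) =
         (\<Sum>l\<in>I. (poly (Np i) (x l) / (\<Prod>l'\<in>I-{l}. (x l - x l'))) / (t - x l))"
    by (rule lagrange_pf[OF finI inj_x _ t]) (use degree_Np[of i] cardI in simp)
  then have "real d ^ (2*n) * (poly (Np i) t / (\<Prod>l\<in>I. (t - x l))) =
         real d ^ (2*n) * (\<Sum>l\<in>I. (poly (Np i) (x l) / (\<Prod>l'\<in>I-{l}. (x l - x l'))) / (t - x l))"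
    by (simp only:)
  then show ?thesis
    by (simp add: fpc_def sf_def r_def sum_distrib_left)
qed

lemma card_I_minus: "l \<in> I \<Longrightarrow> card (I - {l}) = 2*n"
  using cardI by simp

lemma W_real: "l \<in> I \<Longrightarrow> (\<Prod>l'\<in>I-{l}. (x l - x l')) = real d ^ (2*n) * of_int (W l)"
proof -
  assume l: "l \<in> I"
  have "(\<Prod>l'\<in>I-{l}. (x l - x l')) = (\<Prod>l'\<in>I-{l}. real d * of_int (l - l'))"
    by (simp add: x_def algebra_simps)
  also have "\<dots> = real d ^ card (I - {l}) * (\<Prod>l'\<in>I-{l}. of_int (l - l'))"
    by (simp add: prod.distrib)
  finally show ?thesis using card_I_minus[OF l] by (simp add: W_def)
qed

lemma W_abs: "l \<in> I \<Longrightarrow> \<bar>W l\<bar> = fact (nat (int n + l)) * fact (nat (int n - l))"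
proof -
  assume l: "l \<in> I"
  then have l1: "-int n \<le> l" "l \<le> int n" by (auto simp: I_def)
  have split: "I - {l} = {-int n..l-1} \<union> {l+1..int n}" using l1 by (auto simp: I_def)
  have "\<bar>W l\<bar> = (\<Prod>l'\<in>I-{l}. \<bar>l - l'\<bar>)" by (simp add: W_def abs_prod_idom)
  also have "\<dots> = (\<Prod>l'\<in>{-int n..l-1}. \<bar>l - l'\<bar>) * (\<Prod>l'\<in>{l+1..int n}. \<bar>l - l'\<bar>)"
    unfolding split by (rule prod.union_disjoint) auto
  also have "(\<Prod>l'\<in>{-int n..l-1}. \<bar>l - l'\<bar>) = (\<Prod>l'\<in>{-int n..l-1}. l - l')"
    by (intro prod.cong refl) auto
  also have "(\<Prod>l'\<in>{l+1..int n}. \<bar>l - l'\<bar>) = (\<Prod>l'\<in>{l+1..int n}. l' - l)"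
    by (intro prod.cong refl) auto
  finally show ?thesis using prod_neg_interval[OF l1] prod_pos_interval[OF l1] by (simp add: add.commute)
qed

lemma poly_Np: "poly (Np i) (x l) = of_int (Nint i l)"
  by (auto simp: Np_def Nint_def poly_prod x_def intro!: prod.cong)

lemma r_eq: "l \<in> I \<Longrightarrow> r i l = of_int (Nint i l) / of_int (W l)"
  using d by (simp add: r_def W_real poly_Np)

lemma fact_dvd_Nint: "fact (2*n) dvd Nint i l"
proof -
  have A: "(\<Prod>k<2*n. int d * l - int (s i + k)) = pochhammer (int (s i) - int d * l) (2*n)"
  proof -
    have "(\<Prod>k<2*n. int d * l - int (s i + k)) = (\<Prod>k<2*n. - (int (s i) - int d * l + int k))"
      by (intro prod.cong refl) auto
    also have "\<dots> = (\<Prod>k<2*n. (int (s i) - int d * l + int k))"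
      by (subst prod_uminus) simp
    finally show ?thesis by (simp add: pochhammer_prod atLeast0LessThan)
  qed
  have B: "(\<Prod>k<2*n. int d * l + int (s (i-b) + k)) = pochhammer (int d * l + int (s (i-b))) (2*n)"
    by (simp add: pochhammer_prod atLeast0LessThan add.assoc)
  show ?thesis
    unfolding Nint_def using A B by (auto simp: fact_dvd_pochhammer)
qed

lemma W_dvd_fact: "l \<in> I \<Longrightarrow> W l dvd fact (2*n)"
proof -
  assume l: "l \<in> I"
  then have "nat (int n + l) + nat (int n - l) = 2*n" by (auto simp: I_def)
  then have "fact (nat (int n + l)) * fact (nat (int n - l)) dvd (fact (2*n) :: int)"
    using fact_fact_dvd_fact[of "nat (int n + l)" "nat (int n - l)"] by (metis of_nat_dvd_iff of_nat_fact of_nat_mult)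
  then show ?thesis using W_abs[OF l] by (metis abs_dvd_iff)
qed

lemma r_Ints: "l \<in> I \<Longrightarrow> r i l \<in> \<int>"
proof -
  assume l: "l \<in> I"
  have "W l dvd Nint i l" using W_dvd_fact[OF l] fact_dvd_Nint by (rule dvd_trans)
  then have "r i l = of_int (Nint i l div W l)" by (simp add: r_eq[OF l] of_int_div)
  then show ?thesis by simp
qed


definition pb :: "nat \<Rightarrow> real" where "pb i = (\<Prod>k<2*n. real (2*d*n + 2*n*i + 1 + k))"
definition Nb :: "nat \<Rightarrow> real" where
  "Nb i = (if i < b then pb i else if i < 2*b then pb (i-b) else fact (2*n))"
definition Mr :: "nat \<Rightarrow> real" where "Mr i = (\<Sum>l\<in>I. \<bar>r i l\<bar>)"

lemma Nint_bound:
  assumes l: "l \<in> I"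
  shows "\<bar>real_of_int (Nint i l)\<bar> \<le> Nb i"
proof -
  from l have l1: "\<bar>real d * of_int l\<bar> \<le> real d * n"
    by (auto simp: I_def abs_mult abs_le_iff intro!: mult_left_mono)
  have "\<bar>real_of_int (Nint i l)\<bar> = (\<Prod>k<2*n. \<bar>real d * of_int l - real (s i + k)\<bar>)" if "i < b"
    using that by (simp add: Nint_def abs_prod)
  moreover have "(\<Prod>k<2*n. \<bar>real d * of_int l - real (s i + k)\<bar>) \<le> pb i"
    unfolding pb_def
  proof (intro prod_mono conjI abs_ge_zero)
    fix k assume "k \<in> {..<2*n}"
    have "\<bar>real d * of_int l - real (s i + k)\<bar> \<le> \<bar>real d * of_int l\<bar> + real (s i + k)"
      by (rule order_trans[OF abs_triangle_ineq4]) simp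
    also have "\<dots> \<le> real (2*d*n + 2*n*i + 1 + k)" using l1 by (simp add: s_def)
    finally show "\<bar>real d * of_int l - real (s i + k)\<bar> \<le> real (2*d*n + 2*n*i + 1 + k)" .
  qed
  moreover have "\<bar>real_of_int (Nint i l)\<bar> = (\<Prod>k<2*n. \<bar>real d * of_int l + real (s (i-b) + k)\<bar>)" if "\<not> i < b" "i < 2*b"
    using that by (simp add: Nint_def abs_prod)
  moreover have "(\<Prod>k<2*n. \<bar>real d * of_int l + real (s (i-b) + k)\<bar>) \<le> pb (i-b)"
    unfolding pb_def
  proof (intro prod_mono conjI abs_ge_zero)
    fix k assume "k \<in> {..<2*n}"
    have "\<bar>real d * of_int l + real (s (i-b) + k)\<bar> \<le> \<bar>real d * of_int l\<bar> + real (s (i-b) + k)"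
      by (rule order_trans[OF abs_triangle_ineq]) simp
    also have "\<dots> \<le> real (2*d*n + 2*n*(i-b) + 1 + k)" using l1 by (simp add: s_def)
    finally show "\<bar>real d * of_int l + real (s (i-b) + k)\<bar> \<le> real (2*d*n + 2*n*(i-b) + 1 + k)" .
  qed
  ultimately show ?thesis by (cases "i < b"; cases "i < 2*b") (auto simp: Nb_def Nint_def)
qed

lemma binom_sum_I:
  "(\<Sum>l\<in>I. fact (2*n) / (fact (nat (int n + l)) * fact (nat (int n - l)))) = (4::real)^n"
proof -
  have "(\<Sum>l\<in>I. fact (2*n) / (fact (nat (int n + l)) * fact (nat (int n - l)))) =
        (\<Sum>u\<le>2*n. fact (2*n) / (fact u * fact (2*n - u)) :: real)"
    by (rule sum.reindex_bij_witness[where i = "\<lambda>u. int u - int n" and j = "\<lambda>l. nat (int n + l)"])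
       (auto simp: I_def intro!: arg_cong[where f="fact :: nat \<Rightarrow> real"])
  also have "\<dots> = (\<Sum>u\<le>2*n. real (2*n choose u))"
    by (intro sum.cong refl) (simp add: binomial_fact)
  also have "\<dots> = 2^(2*n)" by (simp flip: of_nat_sum add: choose_row_sum)
  also have "\<dots> = (4::real)^n" by (simp add: power_mult)
  finally show ?thesis .
qed

lemma Nb_nonneg: "Nb i \<ge> 0"
  by (auto simp: Nb_def pb_def intro!: prod_nonneg)

lemma Mr_bound: "Mr i \<le> Nb i * 4^n / fact (2*n)"
proof -
  have "Mr i \<le> (\<Sum>l\<in>I. Nb i / fact (2*n) * (fact (2*n) / (fact (nat (int n + l)) * fact (nat (int n - l)))))"
    unfolding Mr_def
  proof (intro sum_mono)
    fix l assume l: "l \<in> I"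
    have "\<bar>r i l\<bar> = \<bar>real_of_int (Nint i l)\<bar> / \<bar>real_of_int (W l)\<bar>" by (simp add: r_eq[OF l])
    also have "\<bar>real_of_int (W l)\<bar> = fact (nat (int n + l)) * fact (nat (int n - l))"
      using W_abs[OF l] by (metis of_int_abs of_int_fact of_int_mult)
    also have "\<bar>real_of_int (Nint i l)\<bar> / (fact (nat (int n + l)) * fact (nat (int n - l)))
        \<le> Nb i / (fact (nat (int n + l)) * fact (nat (int n - l)))"
      by (intro divide_right_mono Nint_bound l) auto
    finally show "\<bar>r i l\<bar> \<le> Nb i / fact (2*n) * (fact (2*n) / (fact (nat (int n + l)) * fact (nat (int n - l))))"
      by simp
  qed
  also have "\<dots> = Nb i / fact (2*n) * 4^n" by (subst sum_distrib_left[symmetric], subst binom_sum_I, rule refl)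
  finally show ?thesis by simp
qed


fun cc :: "nat \<Rightarrow> int \<Rightarrow> nat \<Rightarrow> real" where
  "cc 0 = (\<lambda>l j. if l \<in> I \<and> j = 1 then r 0 l else 0)"
| "cc (Suc k) = step I x (Suc k) (r (Suc k)) (cc k)"

lemma cc_pf: "t \<notin> x ` I \<Longrightarrow> pf I x (Suc k) (cc k) t = (\<Prod>i<Suc k. fpc i t)"
proof (induction k)
  case 0
  then show ?case by (simp add: pf_def fpc_sf sf_def)
next
  case (Suc k)
  have "pf I x (Suc (Suc k)) (cc (Suc k)) t = pf I x (Suc k) (cc k) t * sf I x (r (Suc k)) t"
    using Suc.prems by (simp add: step_pf inj_x)
  also have "\<dots> = (\<Prod>i<Suc (Suc k). fpc i t)"
    using Suc by (simp add: fpc_sf)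
  finally show ?case .
qed

lemma cc_supp: "cc k l j \<noteq> 0 \<Longrightarrow> l \<in> I \<and> j \<in> {1..Suc k}"
  by (cases k) (auto simp: step_def split: if_splits)

definition D :: real where "D = real (Dlcm (2*d*n))"

lemma D_Ints: "D \<in> \<int>" by (simp add: D_def)

lemma dvd_D: "1 \<le> k \<Longrightarrow> k \<le> 2*d*n \<Longrightarrow> k dvd Dlcm (2*d*n)"
  by (simp add: Dlcm_def dvd_Lcm)

lemma D_div_int: 
  fixes z :: int
  assumes "z \<noteq> 0" "\<bar>z\<bar> \<le> 2*d*n"
  shows "D / of_int z \<in> \<int>"
proof -
  have "int (nat \<bar>z\<bar>) \<le> int (2*d*n)" using assms(2) by simp
  then have "nat \<bar>z\<bar> \<le> 2*d*n" by linarith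
  then have "nat \<bar>z\<bar> dvd Dlcm (2*d*n)" using assms by (intro dvd_D) auto
  then have "\<bar>z\<bar> dvd int (Dlcm (2*d*n))" by (metis int_nat_eq abs_ge_zero of_nat_dvd_iff nat_0_le)
  then have "z dvd int (Dlcm (2*d*n))" by simp
  then have "D / of_int z = of_int (int (Dlcm (2*d*n)) div z)" by (simp add: D_def of_int_div)
  then show ?thesis by simp
qed

lemma xD: "l \<in> I \<Longrightarrow> m \<in> I \<Longrightarrow> m \<noteq> l \<Longrightarrow> D / (x m - x l) \<in> \<int>"
proof -
  assume l: "l \<in> I" and m: "m \<in> I" and ml: "m \<noteq> l"
  have eq: "x m - x l = of_int (int d * (m - l))" by (simp add: x_def algebra_simps)
  have "\<bar>m - l\<bar> \<le> 2 * int n" using l m by (auto simp: I_def)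
  then have "\<bar>int d * (m - l)\<bar> \<le> int d * (2 * int n)" by (simp add: abs_mult mult_left_mono)
  then have "\<bar>int d * (m - l)\<bar> \<le> int (2*d*n)" by (simp add: algebra_simps)
  moreover have "int d * (m - l) \<noteq> 0" using d ml by simp
  ultimately show ?thesis unfolding eq by (intro D_div_int) auto
qed

lemma cc_int: "1 \<le> j \<Longrightarrow> j \<le> Suc k \<Longrightarrow> D^(Suc k - j) * cc k l j \<in> \<int>"
proof (induction k arbitrary: l j)
  case 0
  then show ?case using r_Ints by auto
next
  case (Suc k)
  show ?case unfolding cc.simps
    by (rule step_int[OF finI D_Ints r_Ints xD]) (use Suc in auto)
qed

definition Sabs :: "nat \<Rightarrow> real" where "Sabs k = (\<Sum>l\<in>I. \<Sum>j=1..Suc k. \<bar>cc k l j\<bar>)"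

lemma dist_x: "l \<in> I \<Longrightarrow> m \<in> I \<Longrightarrow> m \<noteq> l \<Longrightarrow> 1 \<le> \<bar>x m - x l\<bar>"
proof -
  assume "m \<noteq> l"
  then have "1 \<le> \<bar>m - l\<bar>" by simp
  then have "1 \<le> real_of_int \<bar>m - l\<bar>" by linarith
  moreover have "1 \<le> real d" using d by simp
  ultimately have "1 * 1 \<le> real d * real_of_int \<bar>m - l\<bar>" by (intro mult_mono) auto
  then show ?thesis by (simp add: x_def abs_mult flip: right_diff_distrib)
qed

lemma Mr_nonneg: "Mr i \<ge> 0" by (simp add: Mr_def sum_nonneg)

lemma cc_bound: "Sabs k \<le> (\<Prod>i\<in>{1..k}. real (i+3)) * (\<Prod>i<Suc k. Mr i)"
proof (induction k)
  case 0
  have "Sabs 0 = (\<Sum>l\<in>I. \<bar>r 0 l\<bar>)" by (simp add: Sabs_def)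
  then show ?case by (simp add: Mr_def)
next
  case (Suc k)
  have "Sabs (Suc k) \<le> (real (Suc k) + 3) * Sabs k * Mr (Suc k)"
    unfolding Sabs_def Mr_def cc.simps
    by (rule step_bound[OF finI dist_x])
  also have "\<dots> \<le> (real (Suc k) + 3) * ((\<Prod>i\<in>{1..k}. real (i+3)) * (\<Prod>i<Suc k. Mr i)) * Mr (Suc k)"
    by (intro mult_right_mono mult_left_mono Suc Mr_nonneg) auto
  also have "\<dots> = (\<Prod>i\<in>{1..Suc k}. real (i+3)) * (\<Prod>i<Suc (Suc k). Mr i)"
    by (simp add: prod.nat_ivl_Suc' mult_ac)
  finally show ?case .
qed


lemma prod_Np: "(\<Prod>i<a. poly (Np i) t) = Qn d b n t * fact (2*n) ^ (a - 2*b)"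
proof -
  let ?f = "\<lambda>i. poly (Np i) t"
  have "(\<Prod>i<a. ?f i) = prod ?f {0..<b} * prod ?f {b..<2*b} * prod ?f {2*b..<a}"
    using ab by (simp add: atLeast0LessThan[symmetric] prod.atLeastLessThan_concat)
  also have "prod ?f {0..<b} = (\<Prod>i<b. \<Prod>k<2*n. (t - real (s i + k)))"
    by (intro prod.cong) (auto simp: Np_def poly_prod intro!: prod.cong)
  also have "prod ?f {b..<2*b} = prod (\<lambda>i. ?f (i + b)) {0..<b}"
    using prod.shift_bounds_nat_ivl[of ?f 0 b b] by (simp add: mult_2)
  also have "\<dots> = (\<Prod>i<b. \<Prod>k<2*n. (t + real (s i + k)))"
    by (intro prod.cong) (auto simp: Np_def poly_prod intro!: prod.cong)
  also have "prod ?f {2*b..<a} = fact (2*n) ^ (a - 2*b)"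
    by (simp add: Np_def)
  also have "Qn d b n t = (\<Prod>i<b. \<Prod>k<2*n. (t - real (s i + k))) * (\<Prod>i<b. \<Prod>k<2*n. (t + real (s i + k)))"
  proof -
    have e: "(d + 2*b) * n = d*n + 2*n*b" by (simp add: algebra_simps)
    have "Qn d b n t = (\<Prod>L\<in>{d*n<..d*n + 2*n*b}. (t - real L)) * (\<Prod>L\<in>{d*n<..d*n + 2*n*b}. (t + real L))"
      unfolding Qn_def e by (rule prod.distrib)
    also have "\<dots> = (\<Prod>i<b. \<Prod>k<2*n. (t - real (s i + k))) * (\<Prod>i<b. \<Prod>k<2*n. (t + real (s i + k)))"
      by (simp only: block_prod) (simp add: s_def add.assoc)
    finally show ?thesis .
  qed
  ultimately show ?thesis by simp
qed

lemma Pn_prod: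
  assumes t: "t \<notin> x ` I"
  shows "Pn d a b n t = (\<Prod>i<a. fpc i t)"
proof -
  have R: "Rn d a n t = (\<Prod>l\<in>I. (t - x l)) ^ a" by (simp add: Rn_def I_def x_def)
  have "(\<Prod>i<a. fpc i t) = (real d ^ (2*n)) ^ a * (\<Prod>i<a. poly (Np i) t) / (\<Prod>l\<in>I. (t - x l)) ^ a"
    by (simp add: fpc_def prod_dividef prod.distrib)
  also have "\<dots> = Pn d a b n t"
    by (simp add: Pn_def R prod_Np power_mult[symmetric] mult_ac)
  finally show ?thesis by simp
qed

lemma Acoef_eq: "Acoef d a b n = cc (a - 1)"
proof -
  have aS: "Suc (a - 1) = a" using a by simp
  let ?P = "\<lambda>A. (\<forall>l j. A l j \<noteq> 0 \<longrightarrow> l \<in> {-int n..int n} \<and> j \<in> {1..a}) \<and>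
     (\<forall>t::real. (\<forall>l\<in>{-int n..int n}. t \<noteq> real d * of_int l) \<longrightarrow>
        Pn d a b n t = (\<Sum>j=1..a. \<Sum>l\<in>{-int n..int n}. A l j / (t - real d * of_int l) ^ j))"
  have tI: "(\<forall>l\<in>{-int n..int n}. t \<noteq> real d * of_int l) \<longleftrightarrow> t \<notin> x ` I" for t
    by (auto simp: I_def x_def)
  have Pc: "?P (cc (a-1))"
  proof
    show "\<forall>l j. cc (a-1) l j \<noteq> 0 \<longrightarrow> l \<in> {-int n..int n} \<and> j \<in> {1..a}"
      using cc_supp[of "a-1"] aS by (auto simp: I_def)
    show "\<forall>t. (\<forall>l\<in>{-int n..int n}. t \<noteq> real d * of_int l) \<longrightarrow>
        Pn d a b n t = (\<Sum>j=1..a. \<Sum>l\<in>{-int n..int n}. cc (a-1) l j / (t - real d * of_int l) ^ j)"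
    proof (intro allI impI)
      fix t assume "\<forall>l\<in>{-int n..int n}. t \<noteq> real d * of_int l"
      then have t: "t \<notin> x ` I" using tI by blast
      have "Pn d a b n t = (\<Prod>i<Suc (a-1). fpc i t)" using Pn_prod[OF t] aS by simp
      also have "\<dots> = pf I x (Suc (a-1)) (cc (a-1)) t" using cc_pf[OF t] by simp
      finally show "Pn d a b n t = (\<Sum>j=1..a. \<Sum>l\<in>{-int n..int n}. cc (a-1) l j / (t - real d * of_int l) ^ j)"
        using aS by (simp add: pf_def I_def x_def)
    qed
  qed
  have uniq: "A = cc (a-1)" if PA: "?P A" for A
  proof (intro ext)
    fix l j
    show "A l j = cc (a-1) l j"
    proof (cases "l \<in> I \<and> j \<in> {1..a}")
      case False
      then have "A l j = 0" "cc (a-1) l j = 0" using PA cc_supp[of "a-1" l j] aS by (auto simp: I_def)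
      then show ?thesis by simp
    next
      case True
      have z: "(\<Sum>j=1..a. \<Sum>l\<in>I. (\<lambda>l j. A l j - cc (a-1) l j) l j / (t - x l)^j) = 0" if t: "t \<notin> x ` I" for t
      proof -
        have t': "\<forall>l\<in>{-int n..int n}. t \<noteq> real d * of_int l" using t tI by blast
        have "(\<Sum>j=1..a. \<Sum>l\<in>I. (A l j - cc (a-1) l j) / (t - x l)^j)
            = (\<Sum>j=1..a. \<Sum>l\<in>I. A l j / (t - x l)^j) - (\<Sum>j=1..a. \<Sum>l\<in>I. cc (a-1) l j / (t - x l)^j)"
          by (simp add: diff_divide_distrib sum_subtractf)
        also have "\<dots> = 0" using PA Pc t' by (simp add: I_def x_def)
        finally show ?thesis by simp
      qed
      have "\<forall>J. 1 \<le> J \<longrightarrow> J \<le> a \<longrightarrow> A l J - cc (a-1) l J = 0"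
        using pf_unique[OF finI inj_x z, of l] True by auto
      then show ?thesis using True by auto
    qed
  qed
  show ?thesis unfolding Acoef_def
    by (rule the_equality) (fact Pc, erule uniq)
qed


lemma cc_int': "1 \<le> j \<Longrightarrow> j \<le> a \<Longrightarrow> D^(a - j) * cc (a-1) l j \<in> \<int>"
  using cc_int[of j "a-1" l] a by simp

lemma Aj_int: "1 \<le> j \<Longrightarrow> j \<le> a \<Longrightarrow> real (Dlcm (2*d*n)) ^ a * Aj d a b j n \<in> \<int>"
proof -
  assume j: "1 \<le> j" "j \<le> a"
  have e: "D^a = D^j * D^(a-j)" using j by (simp add: power_add[symmetric])
  have "real (Dlcm (2*d*n)) ^ a * Aj d a b j n = (\<Sum>l\<in>I. D^j * (D^(a-j) * cc (a-1) l j))"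
    unfolding Aj_def Acoef_eq D_def[symmetric] I_def[symmetric] sum_distrib_left
    by (intro sum.cong refl) (simp add: e)
  also have "\<dots> \<in> \<int>" by (intro Ints_sum Ints_mult[OF Ints_power[OF D_Ints] cc_int']) (use j in auto)
  finally show ?thesis .
qed

definition inner :: "nat \<Rightarrow> nat \<Rightarrow> int \<Rightarrow> real" where
  "inner m j l = (\<Sum>k\<in>{0..<nat (int n - l)}. 1 / (real d * real k + real m) ^ j)"

lemma inner_int:
  assumes m: "1 \<le> m" "m \<le> d" and l: "l \<in> I"
  shows "D^j * inner m j l \<in> \<int>"
proof -
  have "D^j * inner m j l = (\<Sum>k\<in>{0..<nat (int n - l)}. (D / of_int (int d * int k + int m))^j)"
    by (simp add: inner_def sum_distrib_left power_divide)
  also have "\<dots> \<in> \<int>"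
  proof (intro Ints_sum Ints_power)
    fix k assume k: "k \<in> {0..<nat (int n - l)}"
    have "int k < int n - l" using k by auto
    moreover have "- int n \<le> l" using l by (auto simp: I_def)
    ultimately have "k + 1 \<le> 2*n" by linarith
    then have "d * (k+1) \<le> d * (2*n)" by (rule mult_left_mono) simp
    then have "d*k + m \<le> 2*d*n" using m by (simp add: algebra_simps)
    then have "int (d*k + m) \<le> int (2*d*n)" by linarith
    then have "\<bar>int d * int k + int m\<bar> \<le> int (2*d*n)" by simp
    moreover have "int d * int k + int m \<noteq> 0"
    proof -
      have "0 \<le> int d * int k" by simp
      then show ?thesis using m by linarith
    qed
    ultimately show "D / real_of_int (int d * int k + int m) \<in> \<int>"
      by (intro D_div_int) auto
  qed
  finally show ?thesis .
qed

lemma Bm_int: "1 \<le> m \<Longrightarrow> m \<le> d \<Longrightarrow> real (Dlcm (2*d*n)) ^ a * Bm d a b m n \<in> \<int>"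
proof -
  assume m: "1 \<le> m" "m \<le> d"
  have B: "Bm d a b m n = (\<Sum>j=1..a. \<Sum>l\<in>I. cc (a-1) l j * inner m j l)"
    by (simp add: Bm_def inner_def Acoef_eq I_def)
  have "real (Dlcm (2*d*n)) ^ a * Bm d a b m n = (\<Sum>j=1..a. \<Sum>l\<in>I. D^a * (cc (a-1) l j * inner m j l))"
    unfolding B D_def[symmetric] by (simp only: sum_distrib_left)
  also have "\<dots> = (\<Sum>j=1..a. \<Sum>l\<in>I. (D^(a-j) * cc (a-1) l j) * (D^j * inner m j l))"
  proof (intro sum.cong refl)
    fix j l assume j: "j \<in> {1..a}"
    have e: "D^a = D^(a-j) * D^j" using j by (simp add: power_add[symmetric])
    show "D^a * (cc (a-1) l j * inner m j l) = (D^(a-j) * cc (a-1) l j) * (D^j * inner m j l)"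
      by (simp add: e mult_ac)
  qed
  also have "\<dots> \<in> \<int>"
    by (intro Ints_sum Ints_mult[OF cc_int' inner_int[OF m]]) auto
  finally show ?thesis .
qed


lemma Aj_abs: "1 \<le> j \<Longrightarrow> j \<le> a \<Longrightarrow> \<bar>Aj d a b j n\<bar> \<le> Sabs (a-1)"
proof -
  assume j: "1 \<le> j" "j \<le> a"
  have "\<bar>Aj d a b j n\<bar> \<le> (\<Sum>l\<in>I. \<bar>cc (a-1) l j\<bar>)"
    unfolding Aj_def Acoef_eq I_def[symmetric] by (rule sum_abs)
  also have "\<dots> \<le> (\<Sum>l\<in>I. \<Sum>j'=1..Suc (a-1). \<bar>cc (a-1) l j'\<bar>)"
    by (intro sum_mono member_le_sum[where f = "\<lambda>j'. \<bar>cc (a-1) _ j'\<bar>"]) (use j in auto)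
  finally show ?thesis by (simp add: Sabs_def)
qed

lemma inner_abs: "1 \<le> m \<Longrightarrow> l \<in> I \<Longrightarrow> \<bar>inner m j l\<bar> \<le> 2 * real n"
proof -
  assume m: "1 \<le> m" and l: "l \<in> I"
  have "\<bar>inner m j l\<bar> \<le> (\<Sum>k\<in>{0..<nat (int n - l)}. \<bar>1 / (real d * real k + real m) ^ j\<bar>)"
    unfolding inner_def by (rule sum_abs)
  also have "\<dots> \<le> (\<Sum>k\<in>{0..<nat (int n - l)}. 1)"
  proof (intro sum_mono)
    fix k
    have "1 \<le> real d * real k + real m" using m by (simp add: add_increasing)
    then have "1 \<le> (real d * real k + real m) ^ j" by (rule one_le_power)
    then show "\<bar>1 / (real d * real k + real m) ^ j\<bar> \<le> 1" by simp
  qed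
  also have "\<dots> = real (nat (int n - l))" by simp
  also have "\<dots> \<le> 2 * real n" using l by (auto simp: I_def)
  finally show ?thesis .
qed

lemma Bm_abs: "1 \<le> m \<Longrightarrow> \<bar>Bm d a b m n\<bar> \<le> 2 * real n * Sabs (a-1)"
proof -
  assume m: "1 \<le> m"
  have B: "Bm d a b m n = (\<Sum>j=1..a. \<Sum>l\<in>I. cc (a-1) l j * inner m j l)"
    by (simp add: Bm_def inner_def Acoef_eq I_def)
  have "\<bar>Bm d a b m n\<bar> \<le> (\<Sum>j=1..a. \<Sum>l\<in>I. \<bar>cc (a-1) l j * inner m j l\<bar>)"
    unfolding B by (rule order_trans[OF sum_abs]) (intro sum_mono sum_abs)
  also have "\<dots> \<le> (\<Sum>j=1..a. \<Sum>l\<in>I. \<bar>cc (a-1) l j\<bar> * (2 * real n))"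
    by (intro sum_mono) (auto simp: abs_mult intro!: mult_left_mono inner_abs m)
  also have "\<dots> = 2 * real n * (\<Sum>l\<in>I. \<Sum>j=1..a. \<bar>cc (a-1) l j\<bar>)"
    by (subst sum.swap) (simp add: sum_distrib_left sum_distrib_right mult_ac)
  also have "\<dots> = 2 * real n * Sabs (a-1)" using a by (simp add: Sabs_def)
  finally show ?thesis .
qed

lemma pb_fact: "pb i = fact (2*d*n + 2*n*i + 2*n) / fact (2*d*n + 2*n*i)"
  unfolding pb_def using prod_consec[where p = "2*n" and c = "2*d*n + 2*n*i"] by (simp add: add.assoc)

lemma prod_pb: "(\<Prod>i<b. pb i) = fact (2*d*n + 2*n*b) / fact (2*d*n)"
  unfolding pb_fact using telescope_fact[where q = b and c = "2*d*n" and p = "2*n"] by simp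

lemma prod_Mr: "(\<Prod>i<a. Mr i) \<le> 4^(a*n) * (fact (2*d*n + 2*n*b) / (fact (2*d*n) * fact (2*n) ^ b))^2"
proof -
  have "(\<Prod>i<a. Mr i) \<le> (\<Prod>i<a. Nb i * 4^n / fact (2*n))"
    by (intro prod_mono conjI Mr_nonneg Mr_bound)
  also have "\<dots> = (\<Prod>i<a. 4^n * (Nb i / fact (2*n)))"
    by (simp add: mult_ac)
  also have "\<dots> = (4^n)^a * (\<Prod>i<a. Nb i / fact (2*n))"
    by (subst prod.distrib) simp
  also have "((4::real)^n)^a = 4^(a*n)"
    by (simp add: power_mult[symmetric] mult.commute)
  also have "(\<Prod>i<a. Nb i / fact (2*n)) = (\<Prod>i<b. pb i / fact (2*n))^2"
  proof -
    let ?f = "\<lambda>i. Nb i / fact (2*n)"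
    have "(\<Prod>i<a. ?f i) = prod ?f {0..<b} * prod ?f {b..<2*b} * prod ?f {2*b..<a}"
      using ab by (simp add: atLeast0LessThan[symmetric] prod.atLeastLessThan_concat)
    also have "prod ?f {0..<b} = (\<Prod>i<b. pb i / fact (2*n))"
      by (intro prod.cong) (auto simp: Nb_def)
    also have "prod ?f {b..<2*b} = prod (\<lambda>i. ?f (i + b)) {0..<b}"
      using prod.shift_bounds_nat_ivl[of ?f 0 b b] by (simp add: mult_2)
    also have "\<dots> = (\<Prod>i<b. pb i / fact (2*n))"
      by (intro prod.cong) (auto simp: Nb_def)
    also have "prod ?f {2*b..<a} = 1"
      by (intro prod.neutral) (auto simp: Nb_def)
    finally show ?thesis by (simp add: power2_eq_square)
  qed
  also have "(\<Prod>i<b. pb i / fact (2*n)) = fact (2*d*n + 2*n*b) / (fact (2*d*n) * fact (2*n) ^ b)"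
    by (simp add: prod_dividef prod_pb)
  finally show ?thesis by simp
qed


definition Cc :: real where
  "Cc = 2 * real a * ln 2 + 4 * real (b + d) * ln (real (b + d)) - 4 * real d * ln (real d)"
definition G :: real where "G = (\<Prod>i\<in>{1..a-1}. real (i+3))"

lemma G_pos: "G > 0" by (simp add: G_def prod_pos)

lemma Cc_nonneg: "Cc \<ge> 0"
proof -
  have "real d * ln (real d) \<le> real (b+d) * ln (real (b+d))"
    using d by (intro mult_mono) (auto intro!: ln_ge_zero)
  moreover have "0 \<le> real a * ln 2" by simp
  ultimately show ?thesis unfolding Cc_def by linarith
qed

lemma exp_identity:
  "4^(a*n) * (real (2*d*n + b*(2*n)) ^ (2*d*n + b*(2*n)) / (real (2*d*n) ^ (2*d*n) * real (2*n) ^ (b*(2*n))))^2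
     = exp (Cc * real n)"
proof -
  define Y where "Y = real (2*d*n + b*(2*n)) ^ (2*d*n + b*(2*n)) / (real (2*d*n) ^ (2*d*n) * real (2*n) ^ (b*(2*n)))"
  have n0: "real n > 0" using n by simp
  have d0: "real d > 0" using d by simp
  have p1: "real (2*d*n + b*(2*n)) > 0" "real (2*d*n) > 0" "real (2*n) > 0"
    using n d by (simp_all only: of_nat_0_less_iff) auto
  have Ypos: "Y > 0" unfolding Y_def using p1 by (intro divide_pos_pos mult_pos_pos zero_less_power)
  have e1: "2*d*n + b*(2*n) = 2*n*(d+b)" by (simp add: algebra_simps)
  have lnY: "ln Y = 2 * real n * (real (d+b)) * ln (real (d+b)) - 2 * real d * real n * ln (real d)"
  proof -
    have "ln Y = real (2*n*(d+b)) * ln (real (2*n*(d+b))) - (real (2*d*n) * ln (real (2*d*n)) + real (b*(2*n)) * ln (real (2*n)))"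
      unfolding Y_def e1 using n d
      by (simp add: ln_div ln_mult ln_realpow zero_less_power del: of_nat_mult)
    also have "ln (real (2*n*(d+b))) = ln (2 * real n) + ln (real (d+b))"
    proof -
      have p: "real (d+b) > 0" using d by simp
      have q: "2 * real n > 0" using n0 by simp
      have eq: "real (2*n*(d+b)) = (2 * real n) * real (d+b)" by (simp only: of_nat_mult of_nat_numeral)
      show ?thesis by (simp only: eq ln_mult_pos[OF q p])
    qed
    also have "ln (real (2*d*n)) = ln (2 * real n) + ln (real d)"
    proof -
      have q: "2 * real n > 0" using n0 by simp
      have eq: "real (2*d*n) = (2 * real n) * real d" by simp
      show ?thesis by (simp only: eq ln_mult_pos[OF q d0])
    qed
    also have "ln (real (2*n)) = ln (2 * real n)" by simp
    finally show ?thesis by (simp add: algebra_simps)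
  qed
  have "ln (4^(a*n) * Y^2) = real (a*n) * ln 4 + 2 * ln Y"
    using Ypos by (simp add: ln_mult ln_realpow)
  also have "ln (4::real) = 2 * ln 2"
    using ln_realpow[of 2 2] by simp
  finally have "ln (4^(a*n) * Y^2) = Cc * real n"
    unfolding lnY Cc_def by (simp add: algebra_simps)
  moreover have "4^(a*n) * Y^2 > 0" using Ypos by simp
  ultimately have "4^(a*n) * Y^2 = exp (Cc * real n)" by (metis exp_ln)
  then show ?thesis by (simp add: Y_def)
qed

lemma Sabs_exp: "Sabs (a-1) \<le> G * exp (Cc * real n)"
proof -
  have aS: "Suc (a-1) = a" using a by simp
  define F where "F = fact (2*d*n + 2*n*b) / (fact (2*d*n) * fact (2*n) ^ b :: real)"
  define Y where "Y = real (2*d*n + b*(2*n)) ^ (2*d*n + b*(2*n)) / (real (2*d*n) ^ (2*d*n) * real (2*n) ^ (b*(2*n)))"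
  have FY: "F \<le> Y"
    unfolding F_def Y_def using multinom_bound[of "2*d*n" "2*n" b] d n by (simp add: mult.commute)
  have F0: "F \<ge> 0" by (simp add: F_def)
  have "Sabs (a-1) \<le> G * (\<Prod>i<a. Mr i)"
    using cc_bound[of "a-1"] aS by (simp add: G_def)
  also have "\<dots> \<le> G * (4^(a*n) * F^2)"
    using prod_Mr G_pos by (simp add: F_def)
  also have "\<dots> \<le> G * (4^(a*n) * Y^2)"
    using FY F0 G_pos by (intro mult_left_mono power_mono) auto
  also have "4^(a*n) * Y^2 = exp (Cc * real n)" unfolding Y_def by (rule exp_identity)
  finally show ?thesis .
qed

lemma Aj_bound: "1 \<le> j \<Longrightarrow> j \<le> a \<Longrightarrow> \<bar>Aj d a b j n\<bar> \<le> 2 * real n * G * exp (Cc * real n)"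
proof -
  assume j: "1 \<le> j" "j \<le> a"
  have "\<bar>Aj d a b j n\<bar> \<le> G * exp (Cc * real n)" using Aj_abs[OF j] Sabs_exp by linarith
  also have "\<dots> \<le> 2 * real n * (G * exp (Cc * real n))"
  proof -
    have "1 * (G * exp (Cc * real n)) \<le> (2 * real n) * (G * exp (Cc * real n))"
      using n G_pos by (intro mult_right_mono) auto
    then show ?thesis by simp
  qed
  finally show ?thesis by (simp add: mult_ac)
qed

lemma Bm_bound: "1 \<le> m \<Longrightarrow> \<bar>Bm d a b m n\<bar> \<le> 2 * real n * G * exp (Cc * real n)"
proof -
  assume m: "1 \<le> m"
  have "\<bar>Bm d a b m n\<bar> \<le> 2 * real n * Sabs (a-1)" by (rule Bm_abs[OF m])
  also have "\<dots> \<le> 2 * real n * (G * exp (Cc * real n))"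
    by (intro mult_left_mono Sabs_exp) auto
  finally show ?thesis by (simp add: mult_ac)
qed

end

lemma eventual_bound:
  fixes f :: "nat \<Rightarrow> real"
  assumes bnd: "\<And>n. n \<ge> 1 \<Longrightarrow> \<bar>f n\<bar> \<le> 2 * real n * G * exp (C * real n)"
    and G: "G > 0" and C: "C \<ge> 0" and e: "\<epsilon> > 0"
  shows "\<forall>\<^sub>F n in sequentially. ln \<bar>f n\<bar> / real n \<le> C + \<epsilon>"
proof -
  have l1: "(\<lambda>n. ln (2*G) / real n) \<longlonglongrightarrow> 0" by (rule lim_const_over_n)
  have l2: "(\<lambda>n. ln (real n) / real n) \<longlonglongrightarrow> 0" by real_asymp
  have "(\<lambda>n. ln (2*G) / real n + ln (real n) / real n) \<longlonglongrightarrow> 0 + 0"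
    by (rule tendsto_add[OF l1 l2])
  then have ev1: "\<forall>\<^sub>F n in sequentially. ln (2*G) / real n + ln (real n) / real n < \<epsilon>"
    using e by (intro order_tendstoD(2)) auto
  have ev2: "\<forall>\<^sub>F n in sequentially. n \<ge> 1" by (rule eventually_ge_at_top)
  show ?thesis
    using ev1 ev2
  proof (eventually_elim)
    case (elim n)
    have n0: "real n > 0" using elim by simp
    show ?case
    proof (cases "f n = 0")
      case True
      then show ?thesis using C e by simp
    next
      case False
      have "ln \<bar>f n\<bar> \<le> ln (2 * real n * G * exp (C * real n))"
        using bnd[OF elim(2)] False by (subst ln_le_cancel_iff) (use G n0 in auto)
      also have "\<dots> = ln (2*G) + ln (real n) + C * real n"
        using G n0 by (simp add: ln_mult_pos mult_ac)
      finally have "ln \<bar>f n\<bar> / real n \<le> (ln (2*G) + ln (real n) + C * real n) / real n"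
        using n0 by (simp add: divide_right_mono)
      also have "\<dots> = ln (2*G) / real n + ln (real n) / real n + C"
        using n0 by (simp add: add_divide_distrib)
      finally show ?thesis using elim(1) by linarith
    qed
  qed
qed

theorem proposition3p4:
  fixes d a b :: nat
  assumes "d > 0" and "a > 0" and "b > 0" and "a \<ge> 2 * b"
  defines "C \<equiv> 2 * real a * ln 2 + 4 * real (b + d) * ln (real (b + d)) - 4 * real d * ln (real d)"
  shows "(\<forall>n j. n \<ge> 1 \<and> 2 \<le> j \<and> j \<le> a \<and> j mod 2 = a mod 2 \<longrightarrow>
            real (Dlcm (2*d*n)) ^ a * Aj d a b j n \<in> \<int>)
       \<and> (\<forall>n m. n \<ge> 1 \<and> 1 \<le> m \<and> m \<le> d \<longrightarrow>
            real (Dlcm (2*d*n)) ^ a * Bm d a b m n \<in> \<int>)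
       \<and> (\<forall>j. 2 \<le> j \<and> j \<le> a \<and> j mod 2 = a mod 2 \<longrightarrow>
            (\<forall>\<epsilon>>0. \<forall>\<^sub>F n in sequentially. ln \<bar>Aj d a b j n\<bar> / real n \<le> C + \<epsilon>))
       \<and> (\<forall>m. 1 \<le> m \<and> m \<le> d \<longrightarrow>
            (\<forall>\<epsilon>>0. \<forall>\<^sub>F n in sequentially. ln \<bar>Bm d a b m n\<bar> / real n \<le> C + \<epsilon>))"
proof -
  define G0 where "G0 = (\<Prod>i\<in>{1..a-1}. real (i+3))"
  have G0: "G0 > 0" by (simp add: G0_def prod_pos)
  have loc: "pfsetup d a b n" if "n \<ge> 1" for n
    using assms that by unfold_locales auto
  have l1: "pfsetup d a b 1" by (rule loc) simp
  have C1: "C \<ge> 0"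
    using pfsetup.Cc_nonneg[OF l1] by (simp add: pfsetup.Cc_def[OF l1] C_def)
  have Ab: "\<bar>Aj d a b j n\<bar> \<le> 2 * real n * G0 * exp (C * real n)" if "n \<ge> 1" "1 \<le> j" "j \<le> a" for n j
    using pfsetup.Aj_bound[OF loc[OF that(1)] that(2,3)]
    by (simp add: pfsetup.Cc_def[OF loc[OF that(1)]] pfsetup.G_def[OF loc[OF that(1)]] C_def G0_def)
  have Bb: "\<bar>Bm d a b m n\<bar> \<le> 2 * real n * G0 * exp (C * real n)" if "n \<ge> 1" "1 \<le> m" for n m
    using pfsetup.Bm_bound[OF loc[OF that(1)] that(2)]
    by (simp add: pfsetup.Cc_def[OF loc[OF that(1)]] pfsetup.G_def[OF loc[OF that(1)]] C_def G0_def)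
  show ?thesis
  proof (intro conjI allI impI)
    fix n j :: nat assume h: "n \<ge> 1 \<and> 2 \<le> j \<and> j \<le> a \<and> j mod 2 = a mod 2"
    then show "real (Dlcm (2*d*n)) ^ a * Aj d a b j n \<in> \<int>"
      using pfsetup.Aj_int[OF loc] by auto
  next
    fix n m :: nat assume h: "n \<ge> 1 \<and> 1 \<le> m \<and> m \<le> d"
    then show "real (Dlcm (2*d*n)) ^ a * Bm d a b m n \<in> \<int>"
      using pfsetup.Bm_int[OF loc] by auto
  next
    fix j :: nat and \<epsilon> :: real assume h: "2 \<le> j \<and> j \<le> a \<and> j mod 2 = a mod 2" and e: "\<epsilon> > 0"
    show "\<forall>\<^sub>F n in sequentially. ln \<bar>Aj d a b j n\<bar> / real n \<le> C + \<epsilon>"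
      by (rule eventual_bound[OF _ G0 C1 e]) (use Ab h in auto)
  next
    fix m :: nat and \<epsilon> :: real assume h: "1 \<le> m \<and> m \<le> d" and e: "\<epsilon> > 0"
    show "\<forall>\<^sub>F n in sequentially. ln \<bar>Bm d a b m n\<bar> / real n \<le> C + \<epsilon>"
      by (rule eventual_bound[OF _ G0 C1 e]) (use Bb h in auto)
  qed
qed


end
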